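(* Let $\mathfrak g$ be a $(2n+2)$-dimensional real almost abelian Lie algebra ($n\ge 1$), let $(J,\langle\cdot,\cdot\rangle)$ be a Hermitian structure on $\mathfrak g$, and let $\mathfrak g'=[\mathfrak g,\mathfrak g]$. (i) If $\dim\mathfrak g'=1$, then $(J,\langle\cdot,\cdot\rangle)$ is LCK if and only if $\dim\mathfrak g=4$ and there is an orthonormal basis $\{f_1,f_2,u,v\}$ of $\mathfrak g$ with $Jf_1=f_2$, $Ju=v$, such that the only nonzero bracket (up to antisymmetry) is $[f_1,f_2]=\mu f_2+mu+nv$ for some $\mu,m,n\in\mathbb R$ with $(m,n)\neq(0,0)$; in this case $\mathfrak g$ is isomorphic to $\mathfrak h_3\times\mathbb R$ (if $\mu=0$) or to $\mathfrak{aff}(\mathbb R)\times\mathbb R^2$ (if $\mu\neq 0$). (ii) If $\dim\mathfrak g'\ge 2$, then $(J,\langle\cdot,\cdot\rangle)$ is LCK if and only if $\mathfrak g$ decomposes as a $J$-invariant orthogonal sum $\mathfrak g=\mathfrak a^{\perp}\ltimes\mathfrak a$ with $\mathfrak a$ an abelian ideal of codimension $2$, and there is an orthonormal basis $\{f_1,f_2\}$ of $\mathfrak a^\perp$ such that $[f_1,f_2]=\mu f_2$, $f_2=Jf_1$, $\operatorname{ad}_{f_2}|_{\mathfrak a}=0$ and $\operatorname{ad}_{f_1}|_{\mathfrak a}=\lambda\,\mathrm{Id}+B$ for some $\mu,\lambda\in\mathbb R$ with $\lambda\neq0$ and some $B\in\mathfrak u(n)$. In this case the Lee form is $\theta=-2\lambda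 f^1$, and $\mathfrak g$ is unimodular if and only if $\lambda=-\frac{\mu}{2n}$.
   Context: An almost abelian Lie algebra is a real Lie algebra with an abelian ideal of codimension one. A Hermitian structure $(J,\langle\cdot,\cdot\rangle)$ on $\mathfrak g$ is a complex structure $J$ ($J^2=-\mathrm{Id}$, vanishing Nijenhuis tensor $N_J(x,y)=[Jx,Jy]-[x,y]-J([Jx,y]+[x,Jy])$) with a $J$-compatible inner product; its fundamental form is $\omega(x,y)=\langle Jx,y\rangle$. The structure is LCK (locally conformal Kähler) if there is a closed $\theta\in\mathfrak g^*$, $\theta\neq 0$ (the Lee form), with $d\omega=\theta\wedge\omega$, where $d$ is the Chevalley–Eilenberg differential. Here $\mathfrak u(n)$ denotes the endomorphisms $B$ of $\mathfrak a$ that are skew-symmetric with respect to $\langle\cdot,\cdot\rangle$ and commute with $J|_{\mathfrak a}$; $f^1$ is the metric dual of $f_1$. $\mathfrak h_3$ is the 3-dimensional Heisenberg Lie algebra and $\mathfrak{aff}(\mathbb R)$ the non-abelian 2-dimensional Lie algebra. A Lie algebra is unimodular if $\operatorname{tr}\operatorname{ad}_x=0$ for all $x$. *)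

theory Defs
  imports "HOL-Analysis.Analysis"
begin

text \<open>The inner product of the Hermitian structure is the inner product of the type
(no loss of generality: the bracket is arbitrary).\<close>

definition lie_algebra :: "('g::real_vector \<Rightarrow> 'g \<Rightarrow> 'g) \<Rightarrow> bool" where
  "lie_algebra br \<longleftrightarrow> bilinear br \<and> (\<forall>x. br x x = 0) \<and>
     (\<forall>x y z. br x (br y z) + br y (br z x) + br z (br x y) = 0)"

definition almost_abelian :: "('g::euclidean_space \<Rightarrow> 'g \<Rightarrow> 'g) \<Rightarrow> bool" where
  "almost_abelian br \<longleftrightarrow> (\<exists>a. subspace a \<and> dim a + 1 = DIM('g) \<and>
     (\<forall>x\<in>a. \<forall>y. br y x \<in> a) \<and> (\<forall>x\<in>a. \<forall>y\<in>a. br x y = 0))"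

definition derived :: "('g::real_vector \<Rightarrow> 'g \<Rightarrow> 'g) \<Rightarrow> 'g set" where
  "derived br = span {br x y | x y. True}"

definition nijenhuis :: "('g::real_vector \<Rightarrow> 'g \<Rightarrow> 'g) \<Rightarrow> ('g \<Rightarrow> 'g) \<Rightarrow> 'g \<Rightarrow> 'g \<Rightarrow> 'g" where
  "nijenhuis br J x y = br (J x) (J y) - br x y - J (br (J x) y + br x (J y))"

definition hermitian :: "('g::real_inner \<Rightarrow> 'g \<Rightarrow> 'g) \<Rightarrow> ('g \<Rightarrow> 'g) \<Rightarrow> bool" where
  "hermitian br J \<longleftrightarrow> linear J \<and> (\<forall>x. J (J x) = - x) \<and>
     (\<forall>x y. nijenhuis br J x y = 0) \<and> (\<forall>x y. inner (J x) (J y) = inner x y)"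

definition fundamental_form :: "('g::real_inner \<Rightarrow> 'g) \<Rightarrow> 'g \<Rightarrow> 'g \<Rightarrow> real" where
  "fundamental_form J x y = inner (J x) y"

definition ce_d1 :: "('g \<Rightarrow> 'g \<Rightarrow> 'g) \<Rightarrow> ('g \<Rightarrow> real) \<Rightarrow> 'g \<Rightarrow> 'g \<Rightarrow> real" where
  "ce_d1 br \<alpha> x y = - \<alpha> (br x y)"

definition ce_d2 :: "('g \<Rightarrow> 'g \<Rightarrow> 'g) \<Rightarrow> ('g \<Rightarrow> 'g \<Rightarrow> real) \<Rightarrow> 'g \<Rightarrow> 'g \<Rightarrow> 'g \<Rightarrow> real" where
  "ce_d2 br \<omega> x y z = - \<omega> (br x y) z - \<omega> (br y z) x - \<omega> (br z x) y"

definition wedge12 :: "('g \<Rightarrow> real) \<Rightarrow> ('g \<Rightarrow> 'g \<Rightarrow> real) \<Rightarrow> 'g \<Rightarrow> 'g \<Rightarrow> 'g \<Rightarrow> real" where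
  "wedge12 \<theta> \<omega> x y z = \<theta> x * \<omega> y z - \<theta> y * \<omega> x z + \<theta> z * \<omega> x y"

definition lee_form :: "('g::real_inner \<Rightarrow> 'g \<Rightarrow> 'g) \<Rightarrow> ('g \<Rightarrow> 'g) \<Rightarrow> ('g \<Rightarrow> real) \<Rightarrow> bool" where
  "lee_form br J \<theta> \<longleftrightarrow> linear \<theta> \<and> \<theta> \<noteq> (\<lambda>_. 0) \<and> (\<forall>x y. ce_d1 br \<theta> x y = 0) \<and>
     (\<forall>x y z. ce_d2 br (fundamental_form J) x y z = wedge12 \<theta> (fundamental_form J) x y z)"

definition LCK :: "('g::real_inner \<Rightarrow> 'g \<Rightarrow> 'g) \<Rightarrow> ('g \<Rightarrow> 'g) \<Rightarrow> bool" where
  "LCK br J \<longleftrightarrow> (\<exists>\<theta>. lee_form br J \<theta>)"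

definition ltrace :: "('g::euclidean_space \<Rightarrow> 'g) \<Rightarrow> real" where
  "ltrace f = (\<Sum>b\<in>Basis. inner (f b) b)"

definition unimodular :: "('g::euclidean_space \<Rightarrow> 'g \<Rightarrow> 'g) \<Rightarrow> bool" where
  "unimodular br \<longleftrightarrow> (\<forall>x. ltrace (br x) = 0)"

definition lie_isomorphic :: "('a::real_vector \<Rightarrow> 'a \<Rightarrow> 'a) \<Rightarrow> ('b::real_vector \<Rightarrow> 'b \<Rightarrow> 'b) \<Rightarrow> bool" where
  "lie_isomorphic br br' \<longleftrightarrow> (\<exists>\<phi>. linear \<phi> \<and> bij \<phi> \<and> (\<forall>x y. \<phi> (br x y) = br' (\<phi> x) (\<phi> y)))"

text \<open>h_3 x R on R^4: basis e1..e4, only nonzero bracket [e1,e2] = e3.\<close>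
definition h3_times_R :: "real \<times> real \<times> real \<times> real \<Rightarrow> real \<times> real \<times> real \<times> real \<Rightarrow> real \<times> real \<times> real \<times> real" where
  "h3_times_R = (\<lambda>(a1,b1,c1,d1) (a2,b2,c2,d2). (0, 0, a1*b2 - b1*a2, 0))"

text \<open>aff(R) x R^2 on R^4: basis e1..e4, only nonzero bracket [e1,e2] = e2.\<close>
definition aff_times_R2 :: "real \<times> real \<times> real \<times> real \<Rightarrow> real \<times> real \<times> real \<times> real \<Rightarrow> real \<times> real \<times> real \<times> real" where
  "aff_times_R2 = (\<lambda>(a1,b1,c1,d1) (a2,b2,c2,d2). (0, a1*b2 - b1*a2, 0, 0))"

end

theory Submission
  imports Defs
begin


lemma herm_facts:
  assumes "hermitian br J"
  shows "linear J" "J (J x) = -x" "inner (J x) (J y) = inner x y"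
    "inner (J x) y = - inner x (J y)" "inner (J x) x = 0" "inner x (J x) = 0"
proof -
  have JI: "\<And>x y. inner (J x) (J y) = inner x y" and jj: "\<And>x. J (J x) = -x"
    using assms unfolding hermitian_def by auto
  show "linear J" using assms unfolding hermitian_def by auto
  show "J (J x) = -x" "inner (J x) (J y) = inner x y" using JI jj by auto
  have j2: "inner (J x) y = - inner x (J y)" for x y
  proof -
    have "inner (J (J x)) (J y) = inner (J x) y" using JI by blast
    moreover have "inner (J (J x)) (J y) = - inner x (J y)" using jj by simp
    ultimately show ?thesis by linarith
  qed
  then show "inner (J x) y = - inner x (J y)" .
  have "inner (J x) x = - inner x (J x)" by (rule j2)
  then show "inner (J x) x = 0" by (simp add: inner_commute)
  then show "inner x (J x) = 0" by (simp add: inner_commute)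
qed

lemma exists_perp:
  fixes a :: "'g::euclidean_space set"
  assumes "subspace a" "x \<in> a" "w \<in> a" "dim a \<ge> 3"
  shows "\<exists>y\<in>a. y \<noteq> 0 \<and> inner x y = 0 \<and> inner w y = 0"
proof -
  let ?S = "{y \<in> a. \<forall>z\<in>span {x, w}. orthogonal z y}"
  have sp: "span {x, w} \<subseteq> a" using assms by (intro span_minimal) auto
  have "dim ?S + dim (span {x, w}) = dim a"
    using dim_subspace_orthogonal_to_vectors[OF subspace_span assms(1) sp] .
  moreover have "dim (span {x, w}) \<le> 2"
  proof -
    have "dim (span {x, w}) \<le> card {x, w}" by (rule dim_le_card) (rule subset_refl, simp)
    also have "\<dots> \<le> 2" by (simp add: card_insert_if)
    finally show ?thesis .
  qed
  ultimately have "dim ?S \<noteq> 0" using assms(4) by linarith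
  then have "\<not> ?S \<subseteq> {0}" unfolding dim_eq_0[symmetric] .
  then obtain y where "y \<in> ?S" "y \<noteq> 0" by blast
  moreover have "x \<in> span {x, w}" "w \<in> span {x, w}" by (simp_all add: span_base)
  ultimately show ?thesis unfolding orthogonal_def by blast
qed
lemma two_dim_decomp:
  fixes a :: "'g::euclidean_space set"
  assumes "subspace a" "dim a = 2" "v \<in> a" "w \<in> a" "v \<noteq> 0" "w \<noteq> 0" "inner v w = 0"
    "x \<in> a"
  shows "x = (inner x v / inner v v) *\<^sub>R v + (inner x w / inner w w) *\<^sub>R w"
proof -
  let ?S = "{y \<in> a. \<forall>z\<in>span {v, w}. orthogonal z y}"
  have sp: "span {v, w} \<subseteq> a" using assms by (intro span_minimal) auto
  have d: "dim ?S + dim (span {v, w}) = dim a"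
    using dim_subspace_orthogonal_to_vectors[OF subspace_span assms(1) sp] .
  have vw: "v \<noteq> w" using assms by auto
  have ind: "independent {v, w}"
    by (rule pairwise_orthogonal_independent) (use assms in \<open>auto simp: pairwise_def orthogonal_def inner_commute\<close>)
  have "dim (span {v, w}) = 2" using dim_eq_card_independent[OF ind] vw by simp
  with d assms(2) have "dim ?S = 0" by simp
  then have S0: "?S \<subseteq> {0}" unfolding dim_eq_0 .
  let ?q = "x - (inner x v / inner v v) *\<^sub>R v - (inner x w / inner w w) *\<^sub>R w"
  have vv: "inner v v \<noteq> 0" "inner w w \<noteq> 0" using assms by auto
  have qa: "?q \<in> a" using assms by (simp add: subspace_diff subspace_scale)
  have wv: "inner w v = 0" using assms(7) by (simp add: inner_commute)
  have c1: "inner x v = inner v x" "inner x w = inner w x" by (simp_all add: inner_commute)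
  have qv: "inner v ?q = 0" using vv assms(7) wv
    by (simp add: inner_diff_right inner_add_right c1)
  have qw: "inner w ?q = 0" using vv assms(7) wv
    by (simp add: inner_diff_right inner_add_right c1)
  have "\<forall>z\<in>span {v, w}. orthogonal z ?q"
  proof
    fix z assume "z \<in> span {v, w}"
    then have "orthogonal ?q z"
      by (rule orthogonal_to_span) (use qv qw in \<open>auto simp: orthogonal_def inner_commute\<close>)
    then show "orthogonal z ?q" by (simp add: orthogonal_def inner_commute)
  qed
  with qa S0 have "?q = 0" by blast
  then show ?thesis by (simp add: algebra_simps)
qed

locale lh =
  fixes br :: "'g::euclidean_space \<Rightarrow> 'g \<Rightarrow> 'g" and J :: "'g \<Rightarrow> 'g"
  assumes la: "lie_algebra br" and he: "hermitian br J"
begin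
lemma Jlin: "linear J" using herm_facts[OF he] by blast
lemma JJ[simp]: "J (J x) = - x" using herm_facts[OF he] by blast
lemma JI[simp]: "inner (J x) (J y) = inner x y" using herm_facts[OF he] by blast
lemma JI2: "inner (J x) y = - inner x (J y)" using herm_facts[OF he] by blast
lemma JIs[simp]: "inner (J x) x = 0" "inner x (J x) = 0" using herm_facts[OF he] by blast+

lemma J_simps[simp]: "J (x + y) = J x + J y" "J (c *\<^sub>R x) = c *\<^sub>R J x"
  "J (x - y) = J x - J y" "J (- x) = - J x" "J 0 = 0"
  using Jlin by (auto simp: linear_add linear_cmul linear_diff linear_neg linear_0)

lemma bil: "bilinear br" using la unfolding lie_algebra_def by blast
lemma br_simps[simp]: "br (x + y) z = br x z + br y z" "br z (x + y) = br z x + br z y"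
  "br (x - y) z = br x z - br y z" "br z (x - y) = br z x - br z y"
  "br (c *\<^sub>R x) z = c *\<^sub>R br x z" "br z (c *\<^sub>R x) = c *\<^sub>R br z x"
  "br (- x) z = - br x z" "br z (- x) = - br z x" "br 0 z = 0" "br z 0 = 0"
  "br x x = 0"
  using bil la unfolding lie_algebra_def
  by (auto simp: bilinear_ladd bilinear_radd bilinear_lsub bilinear_rsub bilinear_lmul
    bilinear_rmul bilinear_lneg bilinear_rneg bilinear_lzero bilinear_rzero)

lemma anti: "br y x = - br x y"
proof -
  have "br (x + y) (x + y) = br x x + br x y + (br y x + br y y)"
    by (simp only: br_simps(1) br_simps(2) add_ac)
  then have "br x y + br y x = 0" by (simp only: br_simps(11)) simp
  then show ?thesis by (metis add.commute eq_neg_iff_add_eq_0)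
qed

lemma lin_br1: "linear (br x)" using bil unfolding bilinear_def by blast


lemma nij: "br (J x) (J y) - br x y - J (br (J x) y + br x (J y)) = 0"
  using he unfolding hermitian_def nijenhuis_def by blast

end

locale hs = lh br J for br :: "'g::euclidean_space \<Rightarrow> 'g \<Rightarrow> 'g" and J +
  fixes f1 f2 :: 'g and a :: "'g set"
  assumes sub: "subspace a" and nf1: "norm f1 = 1" and f2: "J f1 = f2"
  and o1: "\<And>y. y\<in>a \<Longrightarrow> inner f1 y = 0" and o2: "\<And>y. y\<in>a \<Longrightarrow> inner f2 y = 0"
  and Ja: "\<And>y. y\<in>a \<Longrightarrow> J y \<in> a"
  and dec: "\<And>x. x - inner f1 x *\<^sub>R f1 - inner f2 x *\<^sub>R f2 \<in> a"
  and ab: "\<And>x y. x\<in>a \<Longrightarrow> y\<in>a \<Longrightarrow> br x y = 0"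
  and f2a: "\<And>x. x\<in>a \<Longrightarrow> br f2 x = 0"
  and id1: "\<And>x. x\<in>a \<Longrightarrow> inner f1 (br f1 x) = 0"
  and id2: "inner f1 (br f1 f2) = 0"
begin

lemma nf1'[simp]: "inner f1 f1 = 1" using nf1 by (simp add: norm_eq_1)
lemma nf2[simp]: "inner f2 f2 = 1" using f2 [symmetric] by simp
lemma f12[simp]: "inner f1 f2 = 0" "inner f2 f1 = 0"
  using f2 [symmetric] by (auto simp: inner_commute)
lemma Jf2[simp]: "J f2 = - f1" "J f1 = f2" using f2 [symmetric] by auto

lemma fJ[simp]: "inner f2 (J y) = inner f1 y" "inner f1 (J y) = - inner f2 y"
  "inner (J y) f2 = inner y f1" "inner (J y) f1 = - inner y f2"
proof -
  show 1: "inner f2 (J y) = inner f1 y" using JI[of f1 y] by simp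
  show 2: "inner f1 (J y) = - inner f2 y" using JI2[of f1 y] by simp
  show "inner (J y) f2 = inner y f1" using 1 by (simp add: inner_commute)
  show "inner (J y) f1 = - inner y f2" using 2 by (simp add: inner_commute)
qed

lemma a0: "0 \<in> a" using sub by (simp add: subspace_0)
lemma a_add: "x \<in> a \<Longrightarrow> y \<in> a \<Longrightarrow> x + y \<in> a" using sub by (simp add: subspace_add)
lemma a_diff: "x \<in> a \<Longrightarrow> y \<in> a \<Longrightarrow> x - y \<in> a" using sub by (simp add: subspace_diff)
lemma a_scale: "x \<in> a \<Longrightarrow> c *\<^sub>R x \<in> a" using sub by (simp add: subspace_scale)
lemma a_neg: "x \<in> a \<Longrightarrow> - x \<in> a" using sub by (simp add: subspace_neg)

lemma o1'[simp]: "y\<in>a \<Longrightarrow> inner y f1 = 0" "y\<in>a \<Longrightarrow> inner f1 y = 0"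
  using o1 by (metis inner_commute)+
lemma o2'[simp]: "y\<in>a \<Longrightarrow> inner y f2 = 0" "y\<in>a \<Longrightarrow> inner f2 y = 0"
  using o2 by (metis inner_commute)+

definition pa :: "'g \<Rightarrow> 'g" where "pa x = x - inner f1 x *\<^sub>R f1 - inner f2 x *\<^sub>R f2"
lemma pa_in[simp]: "pa x \<in> a" unfolding pa_def by (rule dec)
lemma decomp: "x = inner f1 x *\<^sub>R f1 + inner f2 x *\<^sub>R f2 + pa x"
  unfolding pa_def by simp
lemma pa_a: "x \<in> a \<Longrightarrow> pa x = x" unfolding pa_def by simp

lemma BF: "br x y = (inner f1 x * inner f2 y - inner f2 x * inner f1 y) *\<^sub>R br f1 f2
   + inner f1 x *\<^sub>R br f1 (pa y) - inner f1 y *\<^sub>R br f1 (pa x)"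
proof -
  have e1: "br f2 f1 = - br f1 f2" by (rule anti)
  have e2: "br (pa x) f1 = - br f1 (pa x)" by (rule anti)
  have e3: "br (pa x) f2 = 0" using anti[of f2 "pa x"] f2a[OF pa_in] by simp
  have "br x y = br (inner f1 x *\<^sub>R f1 + inner f2 x *\<^sub>R f2 + pa x)
       (inner f1 y *\<^sub>R f1 + inner f2 y *\<^sub>R f2 + pa y)"
    using decomp[of x] decomp[of y] by simp
  also have "\<dots> = (inner f1 x * inner f2 y - inner f2 x * inner f1 y) *\<^sub>R br f1 f2
   + inner f1 x *\<^sub>R br f1 (pa y) - inner f1 y *\<^sub>R br f1 (pa x)"
    by (simp add: e1 e2 e3 f2a ab algebra_simps)
  finally show ?thesis .
qed


lemma AJ: assumes "x \<in> a" shows "br f1 (J x) = J (br f1 x)"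
proof -
  have "br f2 (J x) - br f1 x - J (br f2 x + br f1 (J x)) = 0" using nij[of f1 x] by simp
  then have "- br f1 x = J (br f1 (J x))" using f2a assms Ja by (simp add: algebra_simps)
  then have "J (- br f1 x) = J (J (br f1 (J x)))" by (rule arg_cong)
  then show ?thesis by simp
qed

lemma Ain: assumes "x \<in> a" shows "br f1 x \<in> a"
proof -
  have "inner f2 (br f1 x) = 0"
  proof -
    have "- br f1 x = J (br f1 (J x))" using AJ[OF Ja[OF assms]] assms by simp
    then have "br f1 x = - J (br f1 (J x))" by (metis minus_minus)
    then have "inner f2 (br f1 x) = - inner (J f1) (J (br f1 (J x)))" by (simp)
    also have "\<dots> = 0" using id1[OF Ja[OF assms]] by simp
    finally show ?thesis .
  qed
  then have "br f1 x = pa (br f1 x)" using id1[OF assms] unfolding pa_def by simp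
  then show ?thesis by (metis pa_in)
qed

lemma lee_eq: assumes "lee_form br J \<theta>"
  shows "- inner (J (br x y)) z - inner (J (br y z)) x - inner (J (br z x)) y
     = \<theta> x * inner (J y) z - \<theta> y * inner (J x) z + \<theta> z * inner (J x) y"
proof -
  have "ce_d2 br (fundamental_form J) x y z = wedge12 \<theta> (fundamental_form J) x y z"
    using assms unfolding lee_form_def by blast
  then show ?thesis by (simp add: ce_d2_def wedge12_def fundamental_form_def)
qed

lemma lee_closed: assumes "lee_form br J \<theta>" shows "\<theta> (br x y) = 0"
  using assms unfolding lee_form_def ce_d1_def by auto

lemma lee_lin: assumes "lee_form br J \<theta>" shows "linear \<theta>"
  using assms unfolding lee_form_def by auto

lemma theta_decomp: assumes "linear \<theta>"
  shows "\<theta> x = inner f1 x * \<theta> f1 + inner f2 x * \<theta> f2 + \<theta> (pa x)"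
proof -
  have "\<theta> x = \<theta> (inner f1 x *\<^sub>R f1 + inner f2 x *\<^sub>R f2 + pa x)" using decomp[of x] by simp
  then show ?thesis using assms by (simp add: linear_add linear_cmul)
qed

lemma L_f2: assumes "lee_form br J \<theta>" "y \<in> a" "y \<noteq> 0" shows "\<theta> f2 = 0"
proof -
  have Jy: "J y \<in> a" using Ja assms by auto
  have "br (J y) f2 = 0" using anti[of f2 "J y"] f2a[OF Jy] by simp
  then have "\<theta> f2 * inner y y = 0"
    using lee_eq[OF assms(1), of f2 y "J y"] f2a assms(2) Jy ab[OF assms(2) Jy]
    by (simp add: JI2)
  then show ?thesis using assms by simp
qed

lemma L_a: assumes "lee_form br J \<theta>" "z \<in> a"
  shows "\<theta> z = - inner (J (br f1 f2)) z"
proof -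
  have e: "br z f1 = - br f1 z" by (rule anti)
  have "inner (J (J (br f1 z))) f2 = 0" using Ain[OF assms(2)] by simp
  then show ?thesis
    using lee_eq[OF assms(1), of f1 f2 z] f2a[OF assms(2)] assms(2) e o1'(1)[OF Ain[OF assms(2)]]
    by (simp add: JI2)
qed

lemma L_sym: assumes "lee_form br J \<theta>" "y \<in> a"
  shows "inner (br f1 y) y = - (\<theta> f1 / 2) * inner y y"
proof -
  have Jy: "J y \<in> a" using Ja assms by auto
  have e: "br (J y) f1 = - J (br f1 y)" using anti[of f1 "J y"] AJ[OF assms(2)] by simp
  have "- inner (J (br f1 y)) (J y) - inner (J (br y (J y))) f1 - inner (J (br (J y) f1)) y
     = \<theta> f1 * inner (J y) (J y) - \<theta> y * inner (J f1) (J y) + \<theta> (J y) * inner (J f1) y"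
    by (rule lee_eq[OF assms(1)])
  then have "- 2 * inner (br f1 y) y = \<theta> f1 * inner y y"
    using ab[OF assms(2) Jy] e Jy assms(2) by simp
  then show ?thesis by simp
qed

lemma L_n2: assumes "lee_form br J \<theta>" "x \<in> a" "y \<in> a" "y \<noteq> 0"
  "inner x y = 0" "inner (J x) y = 0"
  shows "\<theta> x = 0"
proof -
  have Jy: "J y \<in> a" using Ja assms by auto
  have "- inner (J (br x y)) (J y) - inner (J (br y (J y))) x - inner (J (br (J y) x)) y
     = \<theta> x * inner (J y) (J y) - \<theta> y * inner (J x) (J y) + \<theta> (J y) * inner (J x) y"
    by (rule lee_eq[OF assms(1)])
  then have "\<theta> x * inner y y = 0" using ab assms Jy by simp
  then show ?thesis using assms by simp
qed


lemma c_decomp: "br f1 f2 = inner f2 (br f1 f2) *\<^sub>R f2 + pa (br f1 f2)"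
  using decomp[of "br f1 f2"] id2 by simp

lemma L_a': assumes "lee_form br J \<theta>" "z \<in> a"
  shows "\<theta> z = - inner (J (pa (br f1 f2))) z"
proof -
  have "J (br f1 f2) = - inner f2 (br f1 f2) *\<^sub>R f1 + J (pa (br f1 f2))"
    by (subst c_decomp) simp
  then have "inner (J (br f1 f2)) z = inner (J (pa (br f1 f2))) z"
    using assms(2) by (simp add: inner_add_left inner_diff_left)
  then show ?thesis using L_a[OF assms] by simp
qed

lemma a_nonzero: assumes "dim a \<ge> 1" obtains y where "y \<in> a" "y \<noteq> 0"
proof -
  have "\<not> a \<subseteq> {0}"
  proof
    assume "a \<subseteq> {0}"
    then have "dim a = 0" unfolding dim_eq_0 .
    with assms show False by simp
  qed
  then show ?thesis using that by blast
qed

lemma caseA: assumes "lee_form br J \<theta>" "\<theta> f1 \<noteq> 0"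
  shows "pa (br f1 f2) = 0"
proof -
  define w where "w = J (pa (br f1 f2))"
  have wa: "w \<in> a" unfolding w_def by (simp add: Ja)
  have Aw: "br f1 w \<in> a" using Ain[OF wa] .
  have "\<theta> (br f1 w) = 0" by (rule lee_closed[OF assms(1)])
  moreover have "\<theta> (br f1 w) = - inner w (br f1 w)" using L_a'[OF assms(1) Aw] unfolding w_def .
  moreover have "inner (br f1 w) w = - (\<theta> f1 / 2) * inner w w" using L_sym[OF assms(1) wa] .
  ultimately have "(\<theta> f1 / 2) * inner w w = 0" by (simp add: inner_commute)
  then have "w = 0" using assms(2) by simp
  then have "J w = 0" by simp
  then show ?thesis unfolding w_def by simp
qed

lemma caseB: assumes "lee_form br J \<theta>" "\<theta> f1 = 0" "dim a = 2 * n" "n \<ge> 1"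
  shows "n = 1" "pa (br f1 f2) \<noteq> 0" "\<forall>x\<in>a. br f1 x = 0"
proof -
  define v where "v = pa (br f1 f2)"
  have va: "v \<in> a" "J v \<in> a" unfolding v_def by (simp_all add: Ja)
  obtain y0 where y0: "y0 \<in> a" "y0 \<noteq> 0" using a_nonzero assms(3,4) by auto
  have t2: "\<theta> f2 = 0" by (rule L_f2[OF assms(1) y0])
  have lin: "linear \<theta>" by (rule lee_lin[OF assms(1)])
  have "\<theta> \<noteq> (\<lambda>_. 0)" using assms(1) unfolding lee_form_def by blast
  then obtain x where "\<theta> x \<noteq> 0" by blast
  then have tz: "\<theta> (pa x) \<noteq> 0" using theta_decomp[OF lin, of x] assms(2) t2 by simp
  have tz': "\<theta> (pa x) = - inner (J v) (pa x)" using L_a'[OF assms(1) pa_in] unfolding v_def .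
  have Jv0: "J v \<noteq> 0" using tz tz' by auto
  then show v0: "pa (br f1 f2) \<noteq> 0" unfolding v_def by auto
  show n1: "n = 1"
  proof (rule ccontr)
    assume "n \<noteq> 1"
    then have "dim a \<ge> 3" using assms by simp
    then obtain y where y: "y \<in> a" "y \<noteq> 0" "inner (pa x) y = 0" "inner (J (pa x)) y = 0"
      using exists_perp[OF sub pa_in Ja[OF pa_in]] by blast
    have "\<theta> (pa x) = 0" by (rule L_n2[OF assms(1) pa_in y])
    with tz show False by simp
  qed
  have d2: "dim a = 2" using n1 assms(3) by simp
  have vne: "v \<noteq> 0" using v0 unfolding v_def .
  have vJv: "inner v (J v) = 0" by simp
  have rep: "br f1 x = (inner (br f1 x) v / inner v v) *\<^sub>R v" if xa: "x \<in> a" for x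
  proof -
    have Ax: "br f1 x \<in> a" by (rule Ain[OF xa])
    have "inner (J v) (br f1 x) = 0"
      using L_a'[OF assms(1) Ax] lee_closed[OF assms(1)] unfolding v_def by simp
    then have "inner (br f1 x) (J v) = 0" by (simp add: inner_commute)
    then show ?thesis using two_dim_decomp[OF sub d2 va vne Jv0 vJv Ax] by simp
  qed
  have Av: "br f1 v = 0"
  proof -
    have "inner (br f1 v) v = 0" using L_sym[OF assms(1) va(1)] assms(2) by simp
    moreover have "br f1 v = (inner (br f1 v) v / inner v v) *\<^sub>R v" by (rule rep[OF va(1)])
    ultimately show ?thesis by simp
  qed
  have AJv: "br f1 (J v) = 0" using AJ[OF va(1)] Av by simp
  show "\<forall>x\<in>a. br f1 x = 0"
  proof
    fix x assume xa: "x \<in> a"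
    have "x = (inner x v / inner v v) *\<^sub>R v + (inner x (J v) / inner (J v) (J v)) *\<^sub>R J v"
      by (rule two_dim_decomp[OF sub d2 va vne Jv0 vJv xa])
    then have "br f1 x = br f1 ((inner x v / inner v v) *\<^sub>R v + (inner x (J v) / inner (J v) (J v)) *\<^sub>R J v)"
      by (rule arg_cong)
    also have "\<dots> = 0" using Av AJv by simp
    finally show "br f1 x = 0" .
  qed
qed


lemma inner_a_pa: assumes "w \<in> a" shows "inner w z = inner w (pa z)"
proof -
  have "inner w z = inner w (inner f1 z *\<^sub>R f1 + inner f2 z *\<^sub>R f2 + pa z)"
    using decomp[of z] by simp
  then show ?thesis using assms by (simp add: inner_add_right)
qed

lemma om_dec: "inner (J x) y = inner f1 x * inner f2 y - inner f2 x * inner f1 y + inner (J (pa x)) (pa y)"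
proof -
  have "J x = inner f1 x *\<^sub>R f2 - inner f2 x *\<^sub>R f1 + J (pa x)"
    by (subst decomp[of x]) simp
  then have "inner (J x) y = inner f1 x * inner f2 y - inner f2 x * inner f1 y + inner (J (pa x)) y"
    by (simp add: inner_add_left inner_diff_left)
  then show ?thesis using inner_a_pa[OF Ja[OF pa_in]] by simp
qed

lemma om_br: "inner (J (br x y)) z = (inner f1 x * inner f2 y - inner f2 x * inner f1 y) * inner (J (br f1 f2)) z
   + inner f1 x * inner (J (br f1 (pa y))) (pa z) - inner f1 y * inner (J (br f1 (pa x))) (pa z)"
proof -
  have "inner (J (br x y)) z = (inner f1 x * inner f2 y - inner f2 x * inner f1 y) * inner (J (br f1 f2)) z
   + inner f1 x * inner (J (br f1 (pa y))) z - inner f1 y * inner (J (br f1 (pa x))) z"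
    by (subst BF) (simp add: inner_add_left inner_diff_left)
  then show ?thesis
    using inner_a_pa[OF Ja[OF Ain[OF pa_in]]] by simp
qed

lemma d2_formula: "ce_d2 br (fundamental_form J) x y z =
   - ((inner f1 x * inner f2 y - inner f2 x * inner f1 y) * inner (J (br f1 f2)) z
   + inner f1 x * inner (J (br f1 (pa y))) (pa z) - inner f1 y * inner (J (br f1 (pa x))) (pa z))
   - ((inner f1 y * inner f2 z - inner f2 y * inner f1 z) * inner (J (br f1 f2)) x
   + inner f1 y * inner (J (br f1 (pa z))) (pa x) - inner f1 z * inner (J (br f1 (pa y))) (pa x))
   - ((inner f1 z * inner f2 x - inner f2 z * inner f1 x) * inner (J (br f1 f2)) y
   + inner f1 z * inner (J (br f1 (pa x))) (pa y) - inner f1 x * inner (J (br f1 (pa z))) (pa y))"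
  unfolding ce_d2_def fundamental_form_def
  by (simp only: om_br[of x y z] om_br[of y z x] om_br[of z x y])

lemma w_formula: "wedge12 \<theta> (fundamental_form J) x y z =
   \<theta> x * (inner f1 y * inner f2 z - inner f2 y * inner f1 z + inner (J (pa y)) (pa z))
 - \<theta> y * (inner f1 x * inner f2 z - inner f2 x * inner f1 z + inner (J (pa x)) (pa z))
 + \<theta> z * (inner f1 x * inner f2 y - inner f2 x * inner f1 y + inner (J (pa x)) (pa y))"
  unfolding wedge12_def fundamental_form_def
  by (simp only: om_dec[of y z] om_dec[of x z] om_dec[of x y])

lemma verify2:
  assumes A: "\<And>x y. x\<in>a \<Longrightarrow> y\<in>a \<Longrightarrow> inner (br f1 x) y + inner x (br f1 y) = 2 * lam * inner x y"
    and c: "br f1 f2 = mu *\<^sub>R f2" and lam: "lam \<noteq> 0"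
  shows "lee_form br J (\<lambda>x. - 2 * lam * inner f1 x)"
proof -
  define P where "P u v = inner (J (br f1 u)) v" for u v
  define Om where "Om u v = inner (J u) v" for u v
  have PS: "P v u = P u v - 2 * lam * Om u v" if "u \<in> a" "v \<in> a" for u v
  proof -
    have Jv: "J v \<in> a" using Ja that by auto
    have "P v u = inner (br f1 (J v)) u" unfolding P_def using AJ[OF that(2)] by simp
    also have "\<dots> = 2 * lam * inner (J v) u - inner (J v) (br f1 u)"
      using A[OF Jv that(1)] by simp
    also have "inner (J v) (br f1 u) = - P u v" unfolding P_def
      by (metis JI2 inner_commute)
    also have "inner (J v) u = - Om u v" unfolding Om_def by (metis JI2 inner_commute)
    finally show ?thesis by simp
  qed
  have lin: "linear (\<lambda>x. - 2 * lam * inner f1 x)"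
    by (rule linearI) (simp_all add: inner_add_right algebra_simps)
  have nz: "(\<lambda>x. - 2 * lam * inner f1 x) \<noteq> (\<lambda>_. 0)"
  proof
    assume "(\<lambda>x. - 2 * lam * inner f1 x) = (\<lambda>_. 0)"
    then have "- 2 * lam * inner f1 f1 = 0" by (rule fun_cong)
    with lam show False by simp
  qed
  have cl: "ce_d1 br (\<lambda>x. - 2 * lam * inner f1 x) x y = 0" for x y
  proof -
    have "inner f1 (br x y) = 0"
      by (subst BF) (simp add: c inner_add_right inner_diff_right Ain)
    then show ?thesis unfolding ce_d1_def by simp
  qed
  have eq: "ce_d2 br (fundamental_form J) x y z =
      wedge12 (\<lambda>x. - 2 * lam * inner f1 x) (fundamental_form J) x y z" for x y z
  proof -
    have Jc: "inner (J (br f1 f2)) w = - mu * inner f1 w" for w by (simp add: c)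
    have p1: "P (pa z) (pa y) = P (pa y) (pa z) - 2 * lam * Om (pa y) (pa z)" by (rule PS) auto
    have p2: "P (pa z) (pa x) = P (pa x) (pa z) - 2 * lam * Om (pa x) (pa z)" by (rule PS) auto
    have p3: "P (pa y) (pa x) = P (pa x) (pa y) - 2 * lam * Om (pa x) (pa y)" by (rule PS) auto
    show ?thesis unfolding d2_formula w_formula Jc
      unfolding P_def[symmetric] unfolding Om_def[symmetric] p1 p2 p3
      by (simp add: algebra_simps)
  qed
  show ?thesis unfolding lee_form_def using lin nz cl eq by blast
qed


lemma unique2:
  assumes A: "\<And>x y. x\<in>a \<Longrightarrow> y\<in>a \<Longrightarrow> inner (br f1 x) y + inner x (br f1 y) = 2 * lam * inner x y"
    and lam: "lam \<noteq> 0" and da: "dim a \<ge> 1" and th: "lee_form br J \<theta>"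
  shows "\<theta> = (\<lambda>x. - 2 * lam * inner f1 x)"
proof -
  obtain y where y: "y \<in> a" "y \<noteq> 0" using a_nonzero da by blast
  have "inner (br f1 y) y = - (\<theta> f1 / 2) * inner y y" by (rule L_sym[OF th y(1)])
  moreover have "inner (br f1 y) y + inner y (br f1 y) = 2 * lam * inner y y" by (rule A[OF y(1) y(1)])
  ultimately have "(\<theta> f1 + 2 * lam) * inner y y = 0" by (simp add: inner_commute algebra_simps)
  then have t1: "\<theta> f1 = - 2 * lam" using y by simp
  then have "\<theta> f1 \<noteq> 0" using lam by simp
  then have v0: "pa (br f1 f2) = 0" by (rule caseA[OF th])
  have t2: "\<theta> f2 = 0" by (rule L_f2[OF th y])
  have ta: "\<theta> (pa x) = 0" for x using L_a'[OF th pa_in, of x] v0 by simp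
  show ?thesis
  proof
    fix x show "\<theta> x = - 2 * lam * inner f1 x"
      using theta_decomp[OF lee_lin[OF th], of x] t1 t2 ta by simp
  qed
qed

lemma pa_sq: "inner (pa x) (pa x) = inner x x - inner f1 x * inner f1 x - inner f2 x * inner f2 x"
  unfolding pa_def by (simp add: inner_diff_left inner_diff_right inner_commute algebra_simps)

lemma trace_formula:
  assumes A: "\<And>x y. x\<in>a \<Longrightarrow> y\<in>a \<Longrightarrow> inner (br f1 x) y + inner x (br f1 y) = 2 * lam * inner x y"
    and c: "br f1 f2 = mu *\<^sub>R f2"
  shows "ltrace (br x) = inner f1 x * (mu + lam * (real DIM('g) - 2))"
proof -
  have Asq: "inner (br f1 w) w = lam * inner w w" if "w \<in> a" for w
    using A[OF that that] by (simp add: inner_commute)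
  have ib: "inner (br x b) b = mu * inner f1 x * (inner f2 b * inner f2 b) - mu * inner f2 x * (inner f1 b * inner f2 b)
     + inner f1 x * lam * (inner b b - inner f1 b * inner f1 b - inner f2 b * inner f2 b)
     - inner f1 b * inner (br f1 (pa x)) b" for b
  proof -
    have "inner (br x b) b = (inner f1 x * inner f2 b - inner f2 x * inner f1 b) * (mu * inner f2 b)
      + inner f1 x * inner (br f1 (pa b)) b - inner f1 b * inner (br f1 (pa x)) b"
      by (subst BF) (simp add: c inner_add_left inner_diff_left)
    also have "inner (br f1 (pa b)) b = lam * (inner b b - inner f1 b * inner f1 b - inner f2 b * inner f2 b)"
      using inner_a_pa[OF Ain[OF pa_in], of b b] Asq[OF pa_in, of b] pa_sq[of b] by simp
    finally show ?thesis by (simp add: algebra_simps)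
  qed
  have s1: "(\<Sum>b\<in>Basis. inner f2 b * inner f2 b) = 1" using euclidean_inner[of f2 f2] by simp
  have s0: "(\<Sum>b\<in>Basis. inner f1 b * inner f1 b) = 1" using euclidean_inner[of f1 f1] by simp
  have s12: "(\<Sum>b\<in>Basis. inner f1 b * inner f2 b) = 0" using euclidean_inner[of f1 f2] by simp
  have s3: "(\<Sum>b\<in>Basis. inner f1 b * inner (br f1 (pa x)) b) = 0"
    using euclidean_inner[of f1 "br f1 (pa x)"] Ain[OF pa_in, of x] by simp
  have s4: "(\<Sum>b\<in>(Basis::'g set). inner b b) = real DIM('g)" by simp
  have "ltrace (br x) = (\<Sum>b\<in>Basis. inner (br x b) b)" unfolding ltrace_def ..
  also have "\<dots> = mu * inner f1 x * (\<Sum>b\<in>Basis. inner f2 b * inner f2 b)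
     - mu * inner f2 x * (\<Sum>b\<in>Basis. inner f1 b * inner f2 b)
     + inner f1 x * lam * ((\<Sum>b\<in>Basis. inner b (b::'g)) - (\<Sum>b\<in>Basis. inner f1 b * inner f1 b)
         - (\<Sum>b\<in>Basis. inner f2 b * inner f2 b))
     - (\<Sum>b\<in>Basis. inner f1 b * inner (br f1 (pa x)) b)"
    by (simp only: ib sum_subtractf sum.distrib sum_distrib_left[symmetric])
  also have "\<dots> = inner f1 x * (mu + lam * (real DIM('g) - 2))"
    unfolding s1 s0 s12 s3 s4 by (simp add: algebra_simps)
  finally show ?thesis .
qed

end
lemma frac_a: "(N::real) \<noteq> 0 \<Longrightarrow> a * m - b * k = N * z \<Longrightarrow> a / N * m - b / N * k = z"
  by (simp add: field_simps)
lemma frac_b: "(N::real) \<noteq> 0 \<Longrightarrow> a * k + b * m = N * z \<Longrightarrow> a / N * k + b / N * m = z"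
  by (simp add: field_simps)
lemma frac_c: "(N::real) \<noteq> 0 \<Longrightarrow> p = N * z \<Longrightarrow> p / N = z"
  by (simp add: field_simps)

locale conf1 = lh br J for br :: "'g::euclidean_space \<Rightarrow> 'g \<Rightarrow> 'g" and J +
  fixes f1 f2 u v :: 'g and mu m k :: real
  assumes c_n: "norm f1 = 1" "norm f2 = 1" "norm u = 1" "norm v = 1"
  and c_o: "inner f1 f2 = 0" "inner f1 u = 0" "inner f1 v = 0"
           "inner f2 u = 0" "inner f2 v = 0" "inner u v = 0"
  and c_span: "span {f1, f2, u, v} = UNIV" and c_J: "J f1 = f2" "J u = v"
  and c_c: "br f1 f2 = mu *\<^sub>R f2 + m *\<^sub>R u + k *\<^sub>R v"
  and c_b: "br f1 u = 0" "br f1 v = 0" "br f2 u = 0" "br f2 v = 0" "br u v = 0"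
begin

lemma c_n'[simp]: "inner f1 f1 = 1" "inner f2 f2 = 1" "inner u u = 1" "inner v v = 1"
  using c_n by (simp_all add: norm_eq_1)
lemma c_o'[simp]: "inner f1 f2 = 0" "inner f1 u = 0" "inner f1 v = 0"
           "inner f2 u = 0" "inner f2 v = 0" "inner u v = 0"
  "inner f2 f1 = 0" "inner u f1 = 0" "inner v f1 = 0"
           "inner u f2 = 0" "inner v f2 = 0" "inner v u = 0"
  using c_o by (simp_all add: inner_commute)

lemma coord4: "x = inner f1 x *\<^sub>R f1 + inner f2 x *\<^sub>R f2 + inner u x *\<^sub>R u + inner v x *\<^sub>R v"
proof -
  let ?q = "x - (inner f1 x *\<^sub>R f1 + inner f2 x *\<^sub>R f2 + inner u x *\<^sub>R u + inner v x *\<^sub>R v)"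
  have "inner y ?q = 0" if "y \<in> {f1, f2, u, v}" for y
    using that by (auto simp: inner_diff_right inner_add_right)
  then have "orthogonal ?q y" if "y \<in> {f1, f2, u, v}" for y
    using that by (simp add: orthogonal_def inner_commute)
  then have "orthogonal ?q ?q"
    by (intro orthogonal_to_span[of ?q "{f1, f2, u, v}"]) (auto simp: c_span)
  then have "?q = 0" by (simp add: orthogonal_def)
  then show ?thesis by simp
qed

lemma in_span2: "s *\<^sub>R u + t *\<^sub>R v \<in> span {u, v}"
  by (intro span_add span_scale span_base) auto

lemma coord2: assumes "y \<in> span {u, v}" shows "y = inner u y *\<^sub>R u + inner v y *\<^sub>R v"
proof -
  let ?q = "y - (inner u y *\<^sub>R u + inner v y *\<^sub>R v)"
  have "inner z ?q = 0" if "z \<in> {u, v}" for z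
    using that by (auto simp: inner_diff_right inner_add_right)
  then have "orthogonal ?q z" if "z \<in> {u, v}" for z
    using that by (simp add: orthogonal_def inner_commute)
  moreover have "?q \<in> span {u, v}"
    using span_diff[OF assms in_span2[of "inner u y" "inner v y"]] .
  ultimately have "orthogonal ?q ?q"
    by (intro orthogonal_to_span[of ?q "{u, v}"]) auto
  then have "?q = 0" by (simp add: orthogonal_def)
  then show ?thesis by simp
qed

lemma Jv: "J v = - u" using c_J(2)[symmetric] by simp

lemma spanE: assumes "y \<in> span {u, v}" obtains s t where "y = s *\<^sub>R u + t *\<^sub>R v"
  using coord2[OF assms] by blast

lemma hs_inst: "hs br J f1 f2 (span {u, v})"
proof (unfold_locales)
  show "subspace (span {u, v})" by (rule subspace_span)
  show "norm f1 = 1" by (rule c_n(1))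
  show "J f1 = f2" by (rule c_J(1))
  fix y assume "y \<in> span {u, v}"
  then obtain s t where y: "y = s *\<^sub>R u + t *\<^sub>R v" by (rule spanE)
  show "inner f1 y = 0" "inner f2 y = 0" using y by (simp_all add: inner_add_right)
  show "J y \<in> span {u, v}" using y Jv in_span2[of "-t" s] c_J by (simp add: algebra_simps)
  show "br f2 y = 0" "inner f1 (br f1 y) = 0" using y c_b by simp_all
next
  fix x
  have "x - inner f1 x *\<^sub>R f1 - inner f2 x *\<^sub>R f2 = inner u x *\<^sub>R u + inner v x *\<^sub>R v"
    by (subst (1) coord4) simp
  then show "x - inner f1 x *\<^sub>R f1 - inner f2 x *\<^sub>R f2 \<in> span {u, v}" using in_span2 by simp
next
  fix x y assume "x \<in> span {u, v}" "y \<in> span {u, v}"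
  then obtain s t s' t' where "x = s *\<^sub>R u + t *\<^sub>R v" "y = s' *\<^sub>R u + t' *\<^sub>R v"
    by (metis spanE)
  moreover have "br v u = 0" using anti[of u v] c_b by simp
  ultimately show "br x y = 0" using c_b by simp
next
  show "inner f1 (br f1 f2) = 0" by (simp add: c_c inner_add_right)
qed

sublocale H: hs br J f1 f2 "span {u, v}" by (rule hs_inst)

lemma pa1: "H.pa x = inner u x *\<^sub>R u + inner v x *\<^sub>R v"
  unfolding H.pa_def by (subst (1) coord4) simp

lemma BF1: "br x y = (inner f1 x * inner f2 y - inner f2 x * inner f1 y) *\<^sub>R br f1 f2"
  using H.BF[of x y] c_b by (simp add: pa1)

lemma lee1: assumes "(m, k) \<noteq> (0, 0)"
  shows "lee_form br J (\<lambda>x. k * inner u x - m * inner v x)"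
proof -
  have lin: "linear (\<lambda>x. k * inner u x - m * inner v x)"
    by (rule linearI) (simp_all add: inner_add_right algebra_simps)
  have nz: "(\<lambda>x. k * inner u x - m * inner v x) \<noteq> (\<lambda>_. 0)"
  proof
    assume h: "(\<lambda>x. k * inner u x - m * inner v x) = (\<lambda>_. 0)"
    have "k * inner u u - m * inner v u = 0" using fun_cong[OF h, of u] by simp
    moreover have "k * inner u v - m * inner v v = 0" using fun_cong[OF h, of v] by simp
    ultimately show False using assms by simp
  qed
  have cl: "ce_d1 br (\<lambda>x. k * inner u x - m * inner v x) x y = 0" for x y
    unfolding ce_d1_def BF1[of x y] c_c by (simp add: inner_add_right algebra_simps)
  have eq: "ce_d2 br (fundamental_form J) x y z =
      wedge12 (\<lambda>x. k * inner u x - m * inner v x) (fundamental_form J) x y z" for x y z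
  proof -
    have Jc: "inner (J (br f1 f2)) w = - mu * inner f1 w + m * inner v w - k * inner u w" for w
      by (simp add: c_c c_J Jv inner_add_left inner_diff_left)
    have Om: "inner (J (H.pa p)) (H.pa q) = inner u p * inner v q - inner v p * inner u q" for p q
      by (simp add: pa1 c_J Jv inner_add_left inner_add_right inner_diff_left)
    have P0: "br f1 (H.pa p) = 0" for p using c_b by (simp add: pa1)
    show ?thesis unfolding H.d2_formula H.w_formula Jc Om P0
      by (simp add: algebra_simps)
  qed
  show ?thesis unfolding lee_form_def using lin nz cl eq by blast
qed


lemma iso_h3: assumes "mu = 0" "(m, k) \<noteq> (0, 0)" shows "lie_isomorphic br h3_times_R"
proof -
  define N where "N = m * m + k * k"
  have N: "N \<noteq> 0" using assms(2) unfolding N_def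
    by (metis (no_types) add_nonneg_eq_0_iff mult_eq_0_iff prod.inject zero_le_square)
  define \<phi> where "\<phi> x = (inner f1 x, inner f2 x, (m * inner u x + k * inner v x) / N,
     (- k * inner u x + m * inner v x) / N)" for x
  define \<psi> where "\<psi> = (\<lambda>(a1::real, b1::real, c1::real, d1::real).
     a1 *\<^sub>R f1 + b1 *\<^sub>R f2 + (c1 * m - d1 * k) *\<^sub>R u + (c1 * k + d1 * m) *\<^sub>R v)"
  have lin: "linear \<phi>"
    by (rule linearI) (simp_all add: \<phi>_def inner_add_right algebra_simps add_divide_distrib diff_divide_distrib)
  have "\<psi> \<circ> \<phi> = id"
  proof
    fix x
    have e1: "(m * inner u x + k * inner v x) / N * m - (- k * inner u x + m * inner v x) / N * k = inner u x"
      by (rule frac_a[OF N]) (simp add: N_def algebra_simps)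
    have e2: "(m * inner u x + k * inner v x) / N * k + (- k * inner u x + m * inner v x) / N * m = inner v x"
      by (rule frac_b[OF N]) (simp add: N_def algebra_simps)
    show "(\<psi> \<circ> \<phi>) x = id x"
      unfolding \<psi>_def \<phi>_def comp_def id_def using e1 e2 coord4[of x] by simp
  qed
  moreover have "\<phi> \<circ> \<psi> = id"
  proof
    fix p :: "real \<times> real \<times> real \<times> real"
    obtain a1 b1 c1 d1 where p: "p = (a1, b1, c1, d1)" by (cases p) auto
    have e3: "(m * (c1 * m - d1 * k) + k * (c1 * k + d1 * m)) / N = c1"
      by (rule frac_c[OF N]) (simp add: N_def algebra_simps)
    have e4: "(- k * (c1 * m - d1 * k) + m * (c1 * k + d1 * m)) / N = d1"
      by (rule frac_c[OF N]) (simp add: N_def algebra_simps)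
    show "(\<phi> \<circ> \<psi>) p = id p"
      unfolding p \<psi>_def \<phi>_def comp_def id_def using e3 e4
      by (simp add: inner_add_right)
  qed
  ultimately have "bij \<phi>" by (rule o_bij)
  moreover have "\<phi> (br x y) = h3_times_R (\<phi> x) (\<phi> y)" for x y
  proof -
    have pc: "\<phi> (br f1 f2) = (0, 0, 1, 0)" unfolding c_c assms(1)
      using N by (simp add: \<phi>_def inner_add_right N_def[symmetric])
    have "\<phi> (br x y) = (inner f1 x * inner f2 y - inner f2 x * inner f1 y) *\<^sub>R \<phi> (br f1 f2)"
      unfolding BF1[of x y] using lin by (simp add: linear_cmul)
    then show ?thesis unfolding pc by (simp add: \<phi>_def h3_times_R_def)
  qed
  ultimately show ?thesis unfolding lie_isomorphic_def using lin by blast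
qed

lemma iso_aff: assumes "mu \<noteq> 0" shows "lie_isomorphic br aff_times_R2"
proof -
  define \<phi> where "\<phi> x = (mu * inner f1 x, inner f2 x / mu, inner u x - inner f2 x * m / mu,
     inner v x - inner f2 x * k / mu)" for x
  define \<psi> where "\<psi> = (\<lambda>(a1::real, b1::real, c1::real, d1::real).
     (a1 / mu) *\<^sub>R f1 + (b1 * mu) *\<^sub>R f2 + (b1 * m + c1) *\<^sub>R u + (b1 * k + d1) *\<^sub>R v)"
  have lin: "linear \<phi>"
    by (rule linearI) (simp_all add: \<phi>_def inner_add_right algebra_simps add_divide_distrib)
  have "\<psi> \<circ> \<phi> = id"
  proof
    fix x
    show "(\<psi> \<circ> \<phi>) x = id x"
      unfolding \<psi>_def \<phi>_def comp_def id_def using assms coord4[of x] by simp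
  qed
  moreover have "\<phi> \<circ> \<psi> = id"
  proof
    fix p :: "real \<times> real \<times> real \<times> real"
    obtain a1 b1 c1 d1 where p: "p = (a1, b1, c1, d1)" by (cases p) auto
    show "(\<phi> \<circ> \<psi>) p = id p"
      unfolding p \<psi>_def \<phi>_def comp_def id_def using assms
      by (simp add: inner_add_right)
  qed
  ultimately have "bij \<phi>" by (rule o_bij)
  moreover have "\<phi> (br x y) = aff_times_R2 (\<phi> x) (\<phi> y)" for x y
  proof -
    have pc: "\<phi> (br f1 f2) = (0, 1, 0, 0)" unfolding c_c using assms
      by (simp add: \<phi>_def inner_add_right)
    have "\<phi> (br x y) = (inner f1 x * inner f2 y - inner f2 x * inner f1 y) *\<^sub>R \<phi> (br f1 f2)"
      unfolding BF1[of x y] using lin by (simp add: linear_cmul)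
    then show ?thesis unfolding pc using assms by (simp add: \<phi>_def aff_times_R2_def)
  qed
  ultimately show ?thesis unfolding lie_isomorphic_def using lin by blast
qed

end

context lh
begin

lemma Jf_in: "inner f (J x) = - inner (J f) x"
  using JI2[of x f] by (simp add: inner_commute)

lemma setup_from_aa:
  assumes aa: "almost_abelian br" and D: "DIM('g) = 2 * n + 2"
  obtains f1 f2 a where "hs br J f1 f2 a" "dim a = 2 * n"
proof -
  obtain u where u: "subspace u" "dim u + 1 = DIM('g)" "\<And>x y. x\<in>u \<Longrightarrow> br y x \<in> u"
    "\<And>x y. x\<in>u \<Longrightarrow> y\<in>u \<Longrightarrow> br x y = 0"
    using aa unfolding almost_abelian_def by blast
  have "dim u < DIM('g)" using u(2) by simp
  then obtain h where h: "h \<noteq> 0" "span u \<subseteq> {x. h \<bullet> x = 0}"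
    using lowdim_subset_hyperplane by blast
  define f1 where "f1 = (1 / norm h) *\<^sub>R h"
  define f2 where "f2 = J f1"
  have nf1: "norm f1 = 1" using h(1) unfolding f1_def by simp
  have i11: "inner f1 f1 = 1" using nf1 by (simp add: norm_eq_1)
  have i22: "inner f2 f2 = 1" using i11 unfolding f2_def by simp
  have i12: "inner f1 f2 = 0" "inner f2 f1 = 0" unfolding f2_def by (simp_all add: inner_commute)
  have hyp: "{x. inner f1 x = 0} = {x. h \<bullet> x = 0}" using h(1) unfolding f1_def by auto
  have uH: "u = {x. inner f1 x = 0}"
  proof (rule subspace_dim_equal)
    show "subspace u" by (rule u(1))
    show "subspace {x. inner f1 x = 0}" by (rule subspace_hyperplane)
    show "u \<subseteq> {x. inner f1 x = 0}" using h(2) span_superset hyp by blast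
    have "f1 \<noteq> 0" using nf1 by auto
    then show "dim {x. inner f1 x = 0} \<le> dim u" using dim_hyperplane[of f1] u(2) by simp
  qed
  define a where "a = {x. inner f1 x = 0 \<and> inner f2 x = 0}"
  have au: "a \<subseteq> u" unfolding a_def uH by auto
  have f2u: "f2 \<in> u" unfolding uH using i12 by simp
  have hs: "hs br J f1 f2 a"
  proof (unfold_locales)
    show "subspace a" unfolding a_def
      by (auto simp: subspace_def inner_add_right)
    show "norm f1 = 1" by (rule nf1)
    show "J f1 = f2" unfolding f2_def ..
    show "inner f1 y = 0" "inner f2 y = 0" if "y \<in> a" for y using that unfolding a_def by auto
    show "J y \<in> a" if "y \<in> a" for y
    proof -
      have "inner f1 (J y) = - inner f2 y" using Jf_in[of f1 y] unfolding f2_def .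
      moreover have "inner f2 (J y) = inner f1 y" unfolding f2_def by simp
      ultimately show ?thesis using that unfolding a_def by auto
    qed
    show "x - inner f1 x *\<^sub>R f1 - inner f2 x *\<^sub>R f2 \<in> a" for x
      unfolding a_def using i11 i22 i12 by (simp add: inner_diff_right)
    show "br x y = 0" if "x \<in> a" "y \<in> a" for x y using that au u(4) by blast
    show "br f2 x = 0" if "x \<in> a" for x using that au u(4) f2u by blast
    show "inner f1 (br f1 x) = 0" if "x \<in> a" for x
      using u(3)[of x f1] that au unfolding uH by auto
    show "inner f1 (br f1 f2) = 0" using u(3)[OF f2u, of f1] unfolding uH by auto
  qed
  have "dim a = 2 * n"
  proof -
    have aeq: "a = {y \<in> u. \<forall>x\<in>span {f2}. orthogonal x y}"
      unfolding a_def uH by (auto simp: span_singleton orthogonal_def)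
    have "f2 \<noteq> 0" using i22 by auto
    then have "dim (span {f2}) = 1" by simp
    moreover have "dim {y \<in> u. \<forall>x\<in>span {f2}. orthogonal x y} + dim (span {f2}) = dim u"
      by (rule dim_subspace_orthogonal_to_vectors[OF subspace_span u(1)])
         (use f2u u(1) in \<open>simp add: span_minimal\<close>)
    ultimately show ?thesis using aeq u(2) D by simp
  qed
  with hs that show ?thesis by blast
qed

end

context hs
begin

lemma br_in_derived: "br x y \<in> derived br"
  unfolding derived_def by (rule span_base) blast

lemma dim_derived_ge2: assumes th: "lee_form br J \<theta>" "\<theta> f1 \<noteq> 0" and da: "dim a \<ge> 1"
  shows "dim (derived br) \<ge> 2"
proof -
  obtain y where y: "y \<in> a" "y \<noteq> 0" using a_nonzero da by blast
  define p where "p = br f1 y"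
  have "inner p y = - (\<theta> f1 / 2) * inner y y" unfolding p_def by (rule L_sym[OF th(1) y(1)])
  then have pne: "p \<noteq> 0" using th(2) y(2) by auto
  have Jp: "J p = br f1 (J y)" unfolding p_def using AJ[OF y(1)] by simp
  have pJ: "p \<noteq> J p"
  proof
    assume "p = J p"
    then have "inner p p = inner p (J p)" by simp
    then show False using pne by simp
  qed
  have Jpne: "J p \<noteq> 0"
  proof
    assume "J p = 0"
    then have "J (J p) = 0" by simp
    with pne show False by simp
  qed
  have ind: "independent {p, J p}"
    by (rule pairwise_orthogonal_independent)
       (use pne Jpne in \<open>auto simp: pairwise_def orthogonal_def inner_commute\<close>)
  have sub: "{p, J p} \<subseteq> derived br" using br_in_derived[of f1 y] br_in_derived[of f1 "J y"] Jp
    unfolding p_def by auto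
  have "card {p, J p} \<le> dim (derived br)" by (rule independent_card_le_dim[OF sub ind])
  then show ?thesis using pJ by simp
qed

lemma dim_derived_le1: assumes A0: "\<forall>x\<in>a. br f1 x = 0"
  shows "dim (derived br) \<le> 1"
proof -
  have "br x y \<in> span {br f1 f2}" for x y
  proof -
    have "br x y = (inner f1 x * inner f2 y - inner f2 x * inner f1 y) *\<^sub>R br f1 f2"
      using BF[of x y] A0 by simp
    then show ?thesis by (simp add: span_base span_scale)
  qed
  then have "derived br \<subseteq> span {br f1 f2}" unfolding derived_def
    by (intro span_minimal) (auto simp: subspace_span)
  then have "dim (derived br) \<le> dim (span {br f1 f2})" by (rule dim_subset)
  also have "\<dots> \<le> 1" by simp
  finally show ?thesis .
qed

end

context lh
begin

lemma P1_fwd: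
  assumes n: "n \<ge> 1" and D: "DIM('g) = 2 * n + 2" and aa: "almost_abelian br"
    and lck: "LCK br J" and dd: "dim (derived br) = 1"
  shows "DIM('g) = 4 \<and>
        (\<exists>f1 f2 u v \<mu> m k.
           norm f1 = 1 \<and> norm f2 = 1 \<and> norm u = 1 \<and> norm v = 1 \<and>
           inner f1 f2 = 0 \<and> inner f1 u = 0 \<and> inner f1 v = 0 \<and>
           inner f2 u = 0 \<and> inner f2 v = 0 \<and> inner u v = 0 \<and>
           span {f1, f2, u, v} = UNIV \<and> J f1 = f2 \<and> J u = v \<and>
           br f1 f2 = \<mu> *\<^sub>R f2 + m *\<^sub>R u + k *\<^sub>R v \<and>
           br f1 u = 0 \<and> br f1 v = 0 \<and> br f2 u = 0 \<and> br f2 v = 0 \<and> br u v = 0 \<and>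
           (m, k) \<noteq> (0, 0))"
proof -
  obtain f1 f2 a where hsi: "hs br J f1 f2 a" and da: "dim a = 2 * n"
    using setup_from_aa[OF aa D] by blast
  interpret H: hs br J f1 f2 a by (rule hsi)
  obtain \<theta> where th: "lee_form br J \<theta>" using lck unfolding LCK_def by blast
  have t0: "\<theta> f1 = 0"
  proof (rule ccontr)
    assume "\<theta> f1 \<noteq> 0"
    then have "dim (derived br) \<ge> 2" using H.dim_derived_ge2[OF th] da n by simp
    with dd show False by simp
  qed
  have n1: "n = 1" and v0: "H.pa (br f1 f2) \<noteq> 0" and A0: "\<forall>x\<in>a. br f1 x = 0"
    using H.caseB[OF th t0 da n] by auto
  define v where "v = H.pa (br f1 f2)"
  define u0 where "u0 = (1 / norm v) *\<^sub>R v"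
  have va: "v \<in> a" unfolding v_def by simp
  have vne: "v \<noteq> 0" using v0 unfolding v_def .
  have u0a: "u0 \<in> a" "J u0 \<in> a" unfolding u0_def using va H.a_scale H.Ja by auto
  have nu0: "norm u0 = 1" unfolding u0_def using vne by simp
  have iu0: "inner u0 u0 = 1" using nu0 by (simp add: norm_eq_1)
  have nJu0: "norm (J u0) = 1" using iu0 by (simp add: norm_eq_sqrt_inner)
  have u0ne: "u0 \<noteq> 0" "J u0 \<noteq> 0" using nu0 nJu0 by auto
  have vu: "v = norm v *\<^sub>R u0" unfolding u0_def using vne by simp
  have d2: "dim a = 2" using da n1 by simp
  have sp: "span {f1, f2, u0, J u0} = UNIV"
  proof -
    have "x \<in> span {f1, f2, u0, J u0}" for x
    proof -
      have "H.pa x = (inner (H.pa x) u0 / inner u0 u0) *\<^sub>R u0 + (inner (H.pa x) (J u0) / inner (J u0) (J u0)) *\<^sub>R J u0"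
        by (rule two_dim_decomp[OF H.sub d2 u0a u0ne]) simp_all
      then have "x = inner f1 x *\<^sub>R f1 + inner f2 x *\<^sub>R f2 + ((inner (H.pa x) u0 / inner u0 u0) *\<^sub>R u0 + (inner (H.pa x) (J u0) / inner (J u0) (J u0)) *\<^sub>R J u0)"
        using H.decomp[of x] by simp
      also have "\<dots> \<in> span {f1, f2, u0, J u0}"
        by (intro span_add span_scale span_base) auto
      finally show ?thesis .
    qed
    then show ?thesis by auto
  qed
  have c: "br f1 f2 = inner f2 (br f1 f2) *\<^sub>R f2 + norm v *\<^sub>R u0 + 0 *\<^sub>R J u0"
    using H.c_decomp vu unfolding v_def by simp
  have "DIM('g) = 4" using D n1 by simp
  moreover have "norm f1 = 1 \<and> norm f2 = 1 \<and> norm u0 = 1 \<and> norm (J u0) = 1 \<and>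
           inner f1 f2 = 0 \<and> inner f1 u0 = 0 \<and> inner f1 (J u0) = 0 \<and>
           inner f2 u0 = 0 \<and> inner f2 (J u0) = 0 \<and> inner u0 (J u0) = 0 \<and>
           span {f1, f2, u0, J u0} = UNIV \<and> J f1 = f2 \<and> J u0 = J u0 \<and>
           br f1 f2 = inner f2 (br f1 f2) *\<^sub>R f2 + norm v *\<^sub>R u0 + 0 *\<^sub>R J u0 \<and>
           br f1 u0 = 0 \<and> br f1 (J u0) = 0 \<and> br f2 u0 = 0 \<and> br f2 (J u0) = 0 \<and> br u0 (J u0) = 0 \<and>
           (norm v, 0::real) \<noteq> (0, 0)"
    using H.nf1 H.nf2 nu0 nJu0 u0a sp c A0 H.f2a H.ab[OF u0a] vne
    by (simp add: norm_eq_1)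
  ultimately show ?thesis by blast
qed

end

context lh
begin

lemma conf_interp:
  assumes "norm f1 = 1 \<and> norm f2 = 1 \<and> norm u = 1 \<and> norm v = 1 \<and>
           inner f1 f2 = 0 \<and> inner f1 u = 0 \<and> inner f1 v = 0 \<and>
           inner f2 u = 0 \<and> inner f2 v = 0 \<and> inner u v = 0 \<and>
           span {f1, f2, u, v} = UNIV \<and> J f1 = f2 \<and> J u = v \<and>
           br f1 f2 = \<mu> *\<^sub>R f2 + m *\<^sub>R u + k *\<^sub>R v \<and>
           br f1 u = 0 \<and> br f1 v = 0 \<and> br f2 u = 0 \<and> br f2 v = 0 \<and> br u v = 0"
  shows "conf1 br J f1 f2 u v \<mu> m k"
  using assms by (intro conf1.intro conf1_axioms.intro lh_axioms) auto

lemma P1_bwd: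
  assumes "DIM('g) = 4 \<and> (\<exists>f1 f2 u v \<mu> m k. norm f1 = 1 \<and> norm f2 = 1 \<and> norm u = 1 \<and> norm v = 1 \<and>
           inner f1 f2 = 0 \<and> inner f1 u = 0 \<and> inner f1 v = 0 \<and>
           inner f2 u = 0 \<and> inner f2 v = 0 \<and> inner u v = 0 \<and>
           span {f1, f2, u, v} = UNIV \<and> J f1 = f2 \<and> J u = v \<and>
           br f1 f2 = \<mu> *\<^sub>R f2 + m *\<^sub>R u + k *\<^sub>R v \<and>
           br f1 u = 0 \<and> br f1 v = 0 \<and> br f2 u = 0 \<and> br f2 v = 0 \<and> br u v = 0 \<and> (m, k) \<noteq> (0, 0))"
  shows "LCK br J"
proof -
  obtain f1 f2 u v \<mu> m k where h: "norm f1 = 1 \<and> norm f2 = 1 \<and> norm u = 1 \<and> norm v = 1 \<and>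
           inner f1 f2 = 0 \<and> inner f1 u = 0 \<and> inner f1 v = 0 \<and>
           inner f2 u = 0 \<and> inner f2 v = 0 \<and> inner u v = 0 \<and>
           span {f1, f2, u, v} = UNIV \<and> J f1 = f2 \<and> J u = v \<and>
           br f1 f2 = \<mu> *\<^sub>R f2 + m *\<^sub>R u + k *\<^sub>R v \<and>
           br f1 u = 0 \<and> br f1 v = 0 \<and> br f2 u = 0 \<and> br f2 v = 0 \<and> br u v = 0" and mk: "(m, k) \<noteq> (0, 0)" using assms by blast
  interpret C: conf1 br J f1 f2 u v \<mu> m k by (rule conf_interp[OF h])
  show ?thesis unfolding LCK_def using C.lee1[OF mk] by blast
qed

lemma P1_iso:
  "\<forall>f1 f2 u v \<mu> m k. norm f1 = 1 \<and> norm f2 = 1 \<and> norm u = 1 \<and> norm v = 1 \<and>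
           inner f1 f2 = 0 \<and> inner f1 u = 0 \<and> inner f1 v = 0 \<and>
           inner f2 u = 0 \<and> inner f2 v = 0 \<and> inner u v = 0 \<and>
           span {f1, f2, u, v} = UNIV \<and> J f1 = f2 \<and> J u = v \<and>
           br f1 f2 = \<mu> *\<^sub>R f2 + m *\<^sub>R u + k *\<^sub>R v \<and>
           br f1 u = 0 \<and> br f1 v = 0 \<and> br f2 u = 0 \<and> br f2 v = 0 \<and> br u v = 0 \<and> (m, k) \<noteq> (0, 0) \<longrightarrow>
         (\<mu> = 0 \<longrightarrow> lie_isomorphic br h3_times_R) \<and>
         (\<mu> \<noteq> 0 \<longrightarrow> lie_isomorphic br aff_times_R2)"
proof (intro allI impI)
  fix f1 f2 u v \<mu> m k assume h: "norm f1 = 1 \<and> norm f2 = 1 \<and> norm u = 1 \<and> norm v = 1 \<and>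
           inner f1 f2 = 0 \<and> inner f1 u = 0 \<and> inner f1 v = 0 \<and>
           inner f2 u = 0 \<and> inner f2 v = 0 \<and> inner u v = 0 \<and>
           span {f1, f2, u, v} = UNIV \<and> J f1 = f2 \<and> J u = v \<and>
           br f1 f2 = \<mu> *\<^sub>R f2 + m *\<^sub>R u + k *\<^sub>R v \<and>
           br f1 u = 0 \<and> br f1 v = 0 \<and> br f2 u = 0 \<and> br f2 v = 0 \<and> br u v = 0 \<and> (m, k) \<noteq> (0, 0)"
  interpret C: conf1 br J f1 f2 u v \<mu> m k by (rule conf_interp) (use h in blast)
  show "(\<mu> = 0 \<longrightarrow> lie_isomorphic br h3_times_R) \<and> (\<mu> \<noteq> 0 \<longrightarrow> lie_isomorphic br aff_times_R2)"
    using C.iso_h3 C.iso_aff h by blast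
qed

end

lemma span2_coord:
  fixes p q :: "'g::euclidean_space"
  assumes "inner p p = 1" "inner q q = 1" "inner p q = 0" "z \<in> span {p, q}"
  shows "z = inner p z *\<^sub>R p + inner q z *\<^sub>R q"
proof -
  let ?q = "z - (inner p z *\<^sub>R p + inner q z *\<^sub>R q)"
  have qp: "inner q p = 0" using assms(3) by (simp add: inner_commute)
  have "inner y ?q = 0" if "y \<in> {p, q}" for y
    using that assms(1,2,3) qp by (auto simp: inner_diff_right inner_add_right)
  then have "orthogonal ?q y" if "y \<in> {p, q}" for y
    using that by (simp add: orthogonal_def inner_commute)
  moreover have "?q \<in> span {p, q}"
    by (intro span_diff assms(4) span_add span_scale span_base) auto
  ultimately have "orthogonal ?q ?q"
    by (intro orthogonal_to_span[of ?q "{p, q}"]) auto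
  then have "?q = 0" by (simp add: orthogonal_def)
  then show ?thesis by simp
qed


locale data2 = lh br J for br :: "'g::euclidean_space \<Rightarrow> 'g \<Rightarrow> 'g" and J +
  fixes a :: "'g set" and f1 f2 :: 'g and \<mu> lam :: real and B :: "'g \<Rightarrow> 'g" and n :: nat
  assumes d_sub: "subspace a" and d_dim: "dim a = 2 * n"
  and d_ideal: "\<forall>x\<in>a. \<forall>y. br y x \<in> a" and d_ab: "\<forall>x\<in>a. \<forall>y\<in>a. br x y = 0"
  and d_Ja: "J ` a \<subseteq> a"
  and d_f1: "f1 \<in> {x. \<forall>y\<in>a. inner x y = 0}" and d_f2: "f2 \<in> {x. \<forall>y\<in>a. inner x y = 0}"
  and d_n1: "norm f1 = 1" and d_n2: "norm f2 = 1" and d_o: "inner f1 f2 = 0"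
  and d_span: "span {f1, f2} = {x. \<forall>y\<in>a. inner x y = 0}"
  and d_c: "br f1 f2 = \<mu> *\<^sub>R f2" and d_J: "f2 = J f1"
  and d_f2a: "\<forall>x\<in>a. br f2 x = 0"
  and d_linB: "linear B" and d_Ba: "B ` a \<subseteq> a"
  and d_skew: "\<forall>x\<in>a. \<forall>y\<in>a. inner (B x) y = - inner x (B y)"
  and d_BJ: "\<forall>x\<in>a. B (J x) = J (B x)"
  and d_A: "\<forall>x\<in>a. br f1 x = lam *\<^sub>R x + B x"
  and d_lam: "lam \<noteq> 0"
begin

lemma hs2: "hs br J f1 f2 a"
proof (unfold_locales)
  show "subspace a" by (rule d_sub)
  show "norm f1 = 1" by (rule d_n1)
  show "J f1 = f2" using d_J by simp
  show "inner f1 y = 0" if "y \<in> a" for y using d_f1 that by simp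
  show "inner f2 y = 0" if "y \<in> a" for y using d_f2 that by simp
  show "J y \<in> a" if "y \<in> a" for y using d_Ja that by blast
  show "br x y = 0" if "x \<in> a" "y \<in> a" for x y using d_ab that by blast
  show "br f2 x = 0" if "x \<in> a" for x using d_f2a that by blast
  show "inner f1 (br f1 x) = 0" if "x \<in> a" for x
  proof -
    have "br f1 x \<in> a" using d_ideal that by blast
    then show ?thesis using d_f1 by simp
  qed
  show "inner f1 (br f1 f2) = 0" using d_c d_o by simp
  show "x - inner f1 x *\<^sub>R f1 - inner f2 x *\<^sub>R f2 \<in> a" for x
  proof -
    obtain y z where yz: "y \<in> span a" "\<And>w. w \<in> span a \<Longrightarrow> orthogonal z w" "x = y + z"
      by (rule orthogonal_subspace_decomp_exists[where S=a and x=x]) blast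
    have sa: "span a = a" by (simp add: d_sub)
    have ya: "y \<in> a" using yz(1) sa by simp
    have "z \<in> {x. \<forall>y\<in>a. inner x y = 0}"
      using yz(2) span_superset[of a] by (auto simp: orthogonal_def)
    then have zs: "z \<in> span {f1, f2}" using d_span by simp
    have n: "inner f1 f1 = 1" "inner f2 f2 = 1" using d_n1 d_n2 by (simp_all add: norm_eq_1)
    have zc: "z = inner f1 z *\<^sub>R f1 + inner f2 z *\<^sub>R f2"
      by (rule span2_coord[OF n d_o zs])
    have "inner f1 y = 0" "inner f2 y = 0" using d_f1 d_f2 ya by auto
    then have "inner f1 x = inner f1 z" "inner f2 x = inner f2 z" using yz(3) by (simp_all add: inner_add_right)
    moreover have z0: "z - inner f1 z *\<^sub>R f1 - inner f2 z *\<^sub>R f2 = 0"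
      by (simp only: diff_diff_eq zc[symmetric] diff_self)
    ultimately have "x - inner f1 x *\<^sub>R f1 - inner f2 x *\<^sub>R f2 = y + (z - inner f1 z *\<^sub>R f1 - inner f2 z *\<^sub>R f2)"
      using yz(3) by (simp add: algebra_simps)
    then have "x - inner f1 x *\<^sub>R f1 - inner f2 x *\<^sub>R f2 = y" using z0 by simp
    then show ?thesis using ya by simp
  qed
qed

sublocale H: hs br J f1 f2 a by (rule hs2)

lemma Asym: assumes "x \<in> a" "y \<in> a"
  shows "inner (br f1 x) y + inner x (br f1 y) = 2 * lam * inner x y"
proof -
  have "br f1 x = lam *\<^sub>R x + B x" "br f1 y = lam *\<^sub>R y + B y"
    using d_A assms by blast+
  moreover have "inner (B x) y = - inner x (B y)" using d_skew assms by blast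
  ultimately show ?thesis by (simp add: inner_add_left inner_add_right)
qed

lemma lck2: "LCK br J"
  unfolding LCK_def using H.verify2[OF Asym d_c d_lam] by blast

lemma DATA_holds: "subspace a \<and> dim a = 2 * n \<and>
           (\<forall>x\<in>a. \<forall>y. br y x \<in> a) \<and> (\<forall>x\<in>a. \<forall>y\<in>a. br x y = 0) \<and>
           J ` a \<subseteq> a \<and>
           f1 \<in> {x. \<forall>y\<in>a. inner x y = 0} \<and> f2 \<in> {x. \<forall>y\<in>a. inner x y = 0} \<and>
           norm f1 = 1 \<and> norm f2 = 1 \<and> inner f1 f2 = 0 \<and>
           span {f1, f2} = {x. \<forall>y\<in>a. inner x y = 0} \<and>
           br f1 f2 = \<mu> *\<^sub>R f2 \<and> f2 = J f1 \<and>
           (\<forall>x\<in>a. br f2 x = 0) \<and>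
           linear B \<and> B ` a \<subseteq> a \<and>
           (\<forall>x\<in>a. \<forall>y\<in>a. inner (B x) y = - inner x (B y)) \<and>
           (\<forall>x\<in>a. B (J x) = J (B x)) \<and>
           (\<forall>x\<in>a. br f1 x = lam *\<^sub>R x + B x) \<and>
           lam \<noteq> 0"
  by (intro conjI d_sub d_dim d_ideal d_ab d_Ja d_f1 d_f2 d_n1 d_n2 d_o d_span d_c d_J d_f2a d_linB
     d_Ba d_skew d_BJ d_A d_lam)

lemma forall2:
  assumes n: "n \<ge> 1" and D: "DIM('g) = 2 * n + 2"
  shows "(\<forall>\<theta>. lee_form br J \<theta> \<longrightarrow> \<theta> = (\<lambda>x. - 2 * lam * inner f1 x)) \<and>
         (unimodular br \<longleftrightarrow> lam = - \<mu> / (2 * real n))"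
proof
  have da: "dim a \<ge> 1" using d_dim n by simp
  show "\<forall>\<theta>. lee_form br J \<theta> \<longrightarrow> \<theta> = (\<lambda>x. - 2 * lam * inner f1 x)"
    using H.unique2[OF Asym d_lam da] by blast
  have tr: "ltrace (br x) = inner f1 x * (\<mu> + lam * (2 * real n))" for x
    using H.trace_formula[OF Asym d_c, of x] D by simp
  have nn: "real n > 0" using n by simp
  have f11: "inner f1 f1 = 1" using d_n1 by (simp add: norm_eq_1)
  show "unimodular br \<longleftrightarrow> lam = - \<mu> / (2 * real n)"
  proof
    assume "unimodular br"
    then have "ltrace (br f1) = 0" unfolding unimodular_def by blast
    then have "\<mu> + lam * (2 * real n) = 0" using tr[of f1] f11 by simp
    then show "lam = - \<mu> / (2 * real n)" using nn by (simp add: field_simps)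
  next
    assume "lam = - \<mu> / (2 * real n)"
    then have "\<mu> + lam * (2 * real n) = 0" using nn by (simp add: field_simps)
    then show "unimodular br" unfolding unimodular_def using tr by simp
  qed
qed

end

context lh
begin

lemma data2_I: assumes "subspace a \<and> dim a = 2 * n \<and>
           (\<forall>x\<in>a. \<forall>y. br y x \<in> a) \<and> (\<forall>x\<in>a. \<forall>y\<in>a. br x y = 0) \<and>
           J ` a \<subseteq> a \<and>
           f1 \<in> {x. \<forall>y\<in>a. inner x y = 0} \<and> f2 \<in> {x. \<forall>y\<in>a. inner x y = 0} \<and>
           norm f1 = 1 \<and> norm f2 = 1 \<and> inner f1 f2 = 0 \<and>
           span {f1, f2} = {x. \<forall>y\<in>a. inner x y = 0} \<and>
           br f1 f2 = \<mu> *\<^sub>R f2 \<and> f2 = J f1 \<and>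
           (\<forall>x\<in>a. br f2 x = 0) \<and>
           linear B \<and> B ` a \<subseteq> a \<and>
           (\<forall>x\<in>a. \<forall>y\<in>a. inner (B x) y = - inner x (B y)) \<and>
           (\<forall>x\<in>a. B (J x) = J (B x)) \<and>
           (\<forall>x\<in>a. br f1 x = lam *\<^sub>R x + B x) \<and>
           lam \<noteq> 0" shows "data2 br J a f1 f2 \<mu> lam B n"
  apply (insert assms)
  apply (intro data2.intro data2_axioms.intro lh_axioms)
  apply (elim conjE, assumption)+
  done

lemma P2_bwd: assumes "\<exists>a f1 f2 \<mu> lam B. subspace a \<and> dim a = 2 * n \<and>
           (\<forall>x\<in>a. \<forall>y. br y x \<in> a) \<and> (\<forall>x\<in>a. \<forall>y\<in>a. br x y = 0) \<and>
           J ` a \<subseteq> a \<and>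
           f1 \<in> {x. \<forall>y\<in>a. inner x y = 0} \<and> f2 \<in> {x. \<forall>y\<in>a. inner x y = 0} \<and>
           norm f1 = 1 \<and> norm f2 = 1 \<and> inner f1 f2 = 0 \<and>
           span {f1, f2} = {x. \<forall>y\<in>a. inner x y = 0} \<and>
           br f1 f2 = \<mu> *\<^sub>R f2 \<and> f2 = J f1 \<and>
           (\<forall>x\<in>a. br f2 x = 0) \<and>
           linear B \<and> B ` a \<subseteq> a \<and>
           (\<forall>x\<in>a. \<forall>y\<in>a. inner (B x) y = - inner x (B y)) \<and>
           (\<forall>x\<in>a. B (J x) = J (B x)) \<and>
           (\<forall>x\<in>a. br f1 x = lam *\<^sub>R x + B x) \<and>
           lam \<noteq> 0" shows "LCK br J"
proof -
  from assms show ?thesis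
  proof (elim exE)
    fix a f1 f2 \<mu> lam B assume h: "subspace a \<and> dim a = 2 * n \<and>
           (\<forall>x\<in>a. \<forall>y. br y x \<in> a) \<and> (\<forall>x\<in>a. \<forall>y\<in>a. br x y = 0) \<and>
           J ` a \<subseteq> a \<and>
           f1 \<in> {x. \<forall>y\<in>a. inner x y = 0} \<and> f2 \<in> {x. \<forall>y\<in>a. inner x y = 0} \<and>
           norm f1 = 1 \<and> norm f2 = 1 \<and> inner f1 f2 = 0 \<and>
           span {f1, f2} = {x. \<forall>y\<in>a. inner x y = 0} \<and>
           br f1 f2 = \<mu> *\<^sub>R f2 \<and> f2 = J f1 \<and>
           (\<forall>x\<in>a. br f2 x = 0) \<and>
           linear B \<and> B ` a \<subseteq> a \<and>
           (\<forall>x\<in>a. \<forall>y\<in>a. inner (B x) y = - inner x (B y)) \<and>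
           (\<forall>x\<in>a. B (J x) = J (B x)) \<and>
           (\<forall>x\<in>a. br f1 x = lam *\<^sub>R x + B x) \<and>
           lam \<noteq> 0"
    interpret D2: data2 br J a f1 f2 \<mu> lam B n by (rule data2_I[OF h])
    show ?thesis by (rule D2.lck2)
  qed
qed

lemma P2_forall:
  assumes n: "n \<ge> 1" and D: "DIM('g) = 2 * n + 2"
  shows "\<forall>a f1 f2 \<mu> lam B. subspace a \<and> dim a = 2 * n \<and>
           (\<forall>x\<in>a. \<forall>y. br y x \<in> a) \<and> (\<forall>x\<in>a. \<forall>y\<in>a. br x y = 0) \<and>
           J ` a \<subseteq> a \<and>
           f1 \<in> {x. \<forall>y\<in>a. inner x y = 0} \<and> f2 \<in> {x. \<forall>y\<in>a. inner x y = 0} \<and>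
           norm f1 = 1 \<and> norm f2 = 1 \<and> inner f1 f2 = 0 \<and>
           span {f1, f2} = {x. \<forall>y\<in>a. inner x y = 0} \<and>
           br f1 f2 = \<mu> *\<^sub>R f2 \<and> f2 = J f1 \<and>
           (\<forall>x\<in>a. br f2 x = 0) \<and>
           linear B \<and> B ` a \<subseteq> a \<and>
           (\<forall>x\<in>a. \<forall>y\<in>a. inner (B x) y = - inner x (B y)) \<and>
           (\<forall>x\<in>a. B (J x) = J (B x)) \<and>
           (\<forall>x\<in>a. br f1 x = lam *\<^sub>R x + B x) \<and>
           lam \<noteq> 0 \<longrightarrow>
         (\<forall>\<theta>. lee_form br J \<theta> \<longrightarrow> \<theta> = (\<lambda>x. - 2 * lam * inner f1 x)) \<and>
         (unimodular br \<longleftrightarrow> lam = - \<mu> / (2 * real n))"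
proof (intro allI impI)
  fix a f1 f2 \<mu> lam B assume h: "subspace a \<and> dim a = 2 * n \<and>
           (\<forall>x\<in>a. \<forall>y. br y x \<in> a) \<and> (\<forall>x\<in>a. \<forall>y\<in>a. br x y = 0) \<and>
           J ` a \<subseteq> a \<and>
           f1 \<in> {x. \<forall>y\<in>a. inner x y = 0} \<and> f2 \<in> {x. \<forall>y\<in>a. inner x y = 0} \<and>
           norm f1 = 1 \<and> norm f2 = 1 \<and> inner f1 f2 = 0 \<and>
           span {f1, f2} = {x. \<forall>y\<in>a. inner x y = 0} \<and>
           br f1 f2 = \<mu> *\<^sub>R f2 \<and> f2 = J f1 \<and>
           (\<forall>x\<in>a. br f2 x = 0) \<and>
           linear B \<and> B ` a \<subseteq> a \<and>
           (\<forall>x\<in>a. \<forall>y\<in>a. inner (B x) y = - inner x (B y)) \<and>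
           (\<forall>x\<in>a. B (J x) = J (B x)) \<and>
           (\<forall>x\<in>a. br f1 x = lam *\<^sub>R x + B x) \<and>
           lam \<noteq> 0"
  interpret D2: data2 br J a f1 f2 \<mu> lam B n by (rule data2_I[OF h])
  show "(\<forall>\<theta>. lee_form br J \<theta> \<longrightarrow> \<theta> = (\<lambda>x. - 2 * lam * inner f1 x)) \<and>
         (unimodular br \<longleftrightarrow> lam = - \<mu> / (2 * real n))"
    by (rule D2.forall2[OF n D])
qed

end

context lh
begin

lemma P2_fwd:
  assumes n: "n \<ge> 1" and D: "DIM('g) = 2 * n + 2" and aa: "almost_abelian br"
    and lck: "LCK br J" and dd: "dim (derived br) \<ge> 2"
  shows "\<exists>a f1 f2 \<mu> lam B. subspace a \<and> dim a = 2 * n \<and>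
           (\<forall>x\<in>a. \<forall>y. br y x \<in> a) \<and> (\<forall>x\<in>a. \<forall>y\<in>a. br x y = 0) \<and>
           J ` a \<subseteq> a \<and>
           f1 \<in> {x. \<forall>y\<in>a. inner x y = 0} \<and> f2 \<in> {x. \<forall>y\<in>a. inner x y = 0} \<and>
           norm f1 = 1 \<and> norm f2 = 1 \<and> inner f1 f2 = 0 \<and>
           span {f1, f2} = {x. \<forall>y\<in>a. inner x y = 0} \<and>
           br f1 f2 = \<mu> *\<^sub>R f2 \<and> f2 = J f1 \<and>
           (\<forall>x\<in>a. br f2 x = 0) \<and>
           linear B \<and> B ` a \<subseteq> a \<and>
           (\<forall>x\<in>a. \<forall>y\<in>a. inner (B x) y = - inner x (B y)) \<and>
           (\<forall>x\<in>a. B (J x) = J (B x)) \<and>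
           (\<forall>x\<in>a. br f1 x = lam *\<^sub>R x + B x) \<and>
           lam \<noteq> 0"
proof -
  obtain f1 f2 a where hsi: "hs br J f1 f2 a" and da: "dim a = 2 * n"
    using setup_from_aa[OF aa D] by blast
  interpret H: hs br J f1 f2 a by (rule hsi)
  obtain \<theta> where th: "lee_form br J \<theta>" using lck unfolding LCK_def by blast
  have t0: "\<theta> f1 \<noteq> 0"
  proof
    assume t: "\<theta> f1 = 0"
    have "\<forall>x\<in>a. br f1 x = 0" using H.caseB[OF th t da n] by blast
    then have "dim (derived br) \<le> 1" by (rule H.dim_derived_le1)
    with dd show False by simp
  qed
  have v0: "H.pa (br f1 f2) = 0" by (rule H.caseA[OF th t0])
  define lam where "lam = - \<theta> f1 / 2"
  define \<mu> where "\<mu> = inner f2 (br f1 f2)"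
  define B where "B x = br f1 x - lam *\<^sub>R x" for x
  have lam: "lam \<noteq> 0" using t0 unfolding lam_def by simp
  have Asq: "inner (br f1 y) y = lam * inner y y" if "y \<in> a" for y
    using H.L_sym[OF th that] unfolding lam_def by simp
  have pol: "inner (br f1 x) y + inner x (br f1 y) = 2 * lam * inner x y" if "x \<in> a" "y \<in> a" for x y
  proof -
    have xy: "x + y \<in> a" using that by (rule H.a_add)
    have "inner (br f1 (x + y)) (x + y) = lam * inner (x + y) (x + y)" by (rule Asq[OF xy])
    then have "inner (br f1 x) x + inner (br f1 x) y + inner (br f1 y) x + inner (br f1 y) y
       = lam * (inner x x + 2 * inner x y + inner y y)"
      by (simp add: inner_add_left inner_add_right inner_commute[of y x] algebra_simps)
    then show ?thesis using Asq[OF that(1)] Asq[OF that(2)]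
      by (simp add: inner_commute[of x "br f1 y"] algebra_simps)
  qed
  have c: "br f1 f2 = \<mu> *\<^sub>R f2" using H.c_decomp v0 unfolding \<mu>_def by simp
  have d2: "data2 br J a f1 f2 \<mu> lam B n"
  proof (intro data2.intro data2_axioms.intro lh_axioms)
    show "subspace a" by (rule H.sub)
    show "dim a = 2 * n" by (rule da)
    show "\<forall>x\<in>a. \<forall>y. br y x \<in> a"
    proof (intro ballI allI)
      fix x y assume xa: "x \<in> a"
      have "br y x = inner f1 y *\<^sub>R br f1 x" using H.BF[of y x] xa by (simp add: H.pa_a)
      then show "br y x \<in> a" using H.Ain[OF xa] H.a_scale by simp
    qed
    show "\<forall>x\<in>a. \<forall>y\<in>a. br x y = 0" using H.ab by blast
    show "J ` a \<subseteq> a" using H.Ja by blast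
    show "f1 \<in> {x. \<forall>y\<in>a. inner x y = 0}" "f2 \<in> {x. \<forall>y\<in>a. inner x y = 0}" by simp_all
    show "norm f1 = 1" by (rule H.nf1)
    show "norm f2 = 1" using H.nf2 by (simp add: norm_eq_1)
    show "inner f1 f2 = 0" by simp
    show "span {f1, f2} = {x. \<forall>y\<in>a. inner x y = 0}"
    proof
      show "span {f1, f2} \<subseteq> {x. \<forall>y\<in>a. inner x y = 0}"
      proof
        fix z assume z: "z \<in> span {f1, f2}"
        have "orthogonal y z" if "y \<in> a" for y
          by (rule orthogonal_to_span[OF z]) (use that in \<open>auto simp: orthogonal_def\<close>)
        then show "z \<in> {x. \<forall>y\<in>a. inner x y = 0}" by (simp add: orthogonal_def inner_commute)
      qed
      show "{x. \<forall>y\<in>a. inner x y = 0} \<subseteq> span {f1, f2}"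
      proof
        fix z assume "z \<in> {x. \<forall>y\<in>a. inner x y = 0}"
        then have zp: "inner z (H.pa z) = 0" by simp
        have "inner (H.pa z) (H.pa z) = inner (z - inner f1 z *\<^sub>R f1 - inner f2 z *\<^sub>R f2) (H.pa z)"
          by (simp only: H.pa_def[of z])
        also have "\<dots> = inner z (H.pa z)" by (simp add: inner_diff_left)
        finally have "inner (H.pa z) (H.pa z) = inner z (H.pa z)" .
        then have "H.pa z = 0" using zp by simp
        then have "z = inner f1 z *\<^sub>R f1 + inner f2 z *\<^sub>R f2" using H.decomp[of z] by simp
        also have "\<dots> \<in> span {f1, f2}" by (intro span_add span_scale span_base) auto
        finally show "z \<in> span {f1, f2}" .
      qed
    qed
    show "br f1 f2 = \<mu> *\<^sub>R f2" by (rule c)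
    show "f2 = J f1" by simp
    show "\<forall>x\<in>a. br f2 x = 0" using H.f2a by blast
    show "linear B" unfolding B_def by (rule linearI) (simp_all add: algebra_simps)
    show "B ` a \<subseteq> a" unfolding B_def using H.Ain H.a_diff H.a_scale by blast
    show "\<forall>x\<in>a. \<forall>y\<in>a. inner (B x) y = - inner x (B y)"
    proof (intro ballI)
      fix x y assume "x \<in> a" "y \<in> a"
      then show "inner (B x) y = - inner x (B y)" using pol[of x y] unfolding B_def
        by (simp add: inner_diff_left inner_diff_right algebra_simps)
    qed
    show "\<forall>x\<in>a. B (J x) = J (B x)" unfolding B_def using H.AJ by simp
    show "\<forall>x\<in>a. br f1 x = lam *\<^sub>R x + B x" unfolding B_def by simp
    show "lam \<noteq> 0" by (rule lam)
  qed
  show ?thesis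
    apply (rule exI)+
    apply (rule data2.DATA_holds[OF d2])
    done
qed

end

theorem theorem3p3:
  fixes br :: "'g::euclidean_space \<Rightarrow> 'g \<Rightarrow> 'g" and J :: "'g \<Rightarrow> 'g" and n :: nat
  assumes "n \<ge> 1" and "DIM('g) = 2 * n + 2"
    and "lie_algebra br" and "almost_abelian br" and "hermitian br J"
  shows
   "(dim (derived br) = 1 \<longrightarrow>
      (LCK br J \<longleftrightarrow>
        DIM('g) = 4 \<and>
        (\<exists>f1 f2 u v \<mu> m k.
           norm f1 = 1 \<and> norm f2 = 1 \<and> norm u = 1 \<and> norm v = 1 \<and>
           inner f1 f2 = 0 \<and> inner f1 u = 0 \<and> inner f1 v = 0 \<and>
           inner f2 u = 0 \<and> inner f2 v = 0 \<and> inner u v = 0 \<and>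
           span {f1, f2, u, v} = UNIV \<and> J f1 = f2 \<and> J u = v \<and>
           br f1 f2 = \<mu> *\<^sub>R f2 + m *\<^sub>R u + k *\<^sub>R v \<and>
           br f1 u = 0 \<and> br f1 v = 0 \<and> br f2 u = 0 \<and> br f2 v = 0 \<and> br u v = 0 \<and>
           (m, k) \<noteq> (0, 0))) \<and>
      (\<forall>f1 f2 u v \<mu> m k.
           norm f1 = 1 \<and> norm f2 = 1 \<and> norm u = 1 \<and> norm v = 1 \<and>
           inner f1 f2 = 0 \<and> inner f1 u = 0 \<and> inner f1 v = 0 \<and>
           inner f2 u = 0 \<and> inner f2 v = 0 \<and> inner u v = 0 \<and>
           span {f1, f2, u, v} = UNIV \<and> J f1 = f2 \<and> J u = v \<and>
           br f1 f2 = \<mu> *\<^sub>R f2 + m *\<^sub>R u + k *\<^sub>R v \<and>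
           br f1 u = 0 \<and> br f1 v = 0 \<and> br f2 u = 0 \<and> br f2 v = 0 \<and> br u v = 0 \<and>
           (m, k) \<noteq> (0, 0) \<longrightarrow>
         (\<mu> = 0 \<longrightarrow> lie_isomorphic br h3_times_R) \<and>
         (\<mu> \<noteq> 0 \<longrightarrow> lie_isomorphic br aff_times_R2)))
  \<and>
   (dim (derived br) \<ge> 2 \<longrightarrow>
      (LCK br J \<longleftrightarrow>
        (\<exists>a f1 f2 \<mu> lam B.
           subspace a \<and> dim a = 2 * n \<and>
           (\<forall>x\<in>a. \<forall>y. br y x \<in> a) \<and> (\<forall>x\<in>a. \<forall>y\<in>a. br x y = 0) \<and>
           J ` a \<subseteq> a \<and>
           f1 \<in> {x. \<forall>y\<in>a. inner x y = 0} \<and> f2 \<in> {x. \<forall>y\<in>a. inner x y = 0} \<and>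
           norm f1 = 1 \<and> norm f2 = 1 \<and> inner f1 f2 = 0 \<and>
           span {f1, f2} = {x. \<forall>y\<in>a. inner x y = 0} \<and>
           br f1 f2 = \<mu> *\<^sub>R f2 \<and> f2 = J f1 \<and>
           (\<forall>x\<in>a. br f2 x = 0) \<and>
           linear B \<and> B ` a \<subseteq> a \<and>
           (\<forall>x\<in>a. \<forall>y\<in>a. inner (B x) y = - inner x (B y)) \<and>
           (\<forall>x\<in>a. B (J x) = J (B x)) \<and>
           (\<forall>x\<in>a. br f1 x = lam *\<^sub>R x + B x) \<and>
           lam \<noteq> 0)) \<and>
      (\<forall>a f1 f2 \<mu> lam B.
           subspace a \<and> dim a = 2 * n \<and>
           (\<forall>x\<in>a. \<forall>y. br y x \<in> a) \<and> (\<forall>x\<in>a. \<forall>y\<in>a. br x y = 0) \<and>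
           J ` a \<subseteq> a \<and>
           f1 \<in> {x. \<forall>y\<in>a. inner x y = 0} \<and> f2 \<in> {x. \<forall>y\<in>a. inner x y = 0} \<and>
           norm f1 = 1 \<and> norm f2 = 1 \<and> inner f1 f2 = 0 \<and>
           span {f1, f2} = {x. \<forall>y\<in>a. inner x y = 0} \<and>
           br f1 f2 = \<mu> *\<^sub>R f2 \<and> f2 = J f1 \<and>
           (\<forall>x\<in>a. br f2 x = 0) \<and>
           linear B \<and> B ` a \<subseteq> a \<and>
           (\<forall>x\<in>a. \<forall>y\<in>a. inner (B x) y = - inner x (B y)) \<and>
           (\<forall>x\<in>a. B (J x) = J (B x)) \<and>
           (\<forall>x\<in>a. br f1 x = lam *\<^sub>R x + B x) \<and>
           lam \<noteq> 0 \<longrightarrow>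
         (\<forall>\<theta>. lee_form br J \<theta> \<longrightarrow> \<theta> = (\<lambda>x. - 2 * lam * inner f1 x)) \<and>
         (unimodular br \<longleftrightarrow> lam = - \<mu> / (2 * real n))))"
  proof -
  interpret L: lh br J by (rule lh.intro) (rule assms(3), rule assms(5))
  show ?thesis
    apply (rule conjI)
     apply (rule impI)
     apply (rule conjI)
      apply (rule iffI)
       apply (rule L.P1_fwd[OF assms(1,2,4)], assumption, assumption)
      apply (rule L.P1_bwd, assumption)
     apply (rule L.P1_iso)
    apply (rule impI)
    apply (rule conjI)
     apply (rule iffI)
      apply (rule L.P2_fwd[OF assms(1,2,4)], assumption, assumption)
     apply (rule L.P2_bwd, assumption)
    apply (rule L.P2_forall[OF assms(1,2)])
    done
qed

end
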